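(* Let $C_2$ denote the 2-chain. Then \[ [C_2 \odot C_2]' = \Big\{ \textstyle\bigsqcup_{i=1}^{n} C_2 : n \ge 2 \Big\} \cup \{ X_n : n \ge 3 \}, \] i.e. the posets $P$ with $P \oslash' C_2 \cong C_2$ and $P\not\cong C_2$ are exactly the parallel compositions (disjoint unions with elements of different copies incomparable) of $n\ge2$ copies of the 2-chain and the $n$-crown posets $X_n$ with $n\ge3$.
   Context: $C_2=\{x<y\}$. The $n$-crown $X_n$ has elements $a_1,\dots,a_n,b_1,\dots,b_n$ with relations exactly $a_i<b_j$ for $i\ne j$. Notation for a poset $P$: $J^-(a)=\{c:c\le a\}$, $J^+(a)=\{c:a\le c\}$; $\ell(X)$ is the cardinality of a longest chain of a poset $X$. A subset $A$ of a poset $X$ is maximally ordered in $X$ if $|\{(a,b)\in A\times A:a<b\}|$ is maximal among subsets of $X$ of cardinality $|A|$. $A\subseteq P$ is linked if for all $a<b$ in $A$, either $b$ covers $a$ or there exists $c\in J^+(a)\cap J^-(b)$ with $c\in A$. For $\sigma\in\mathrm{Aut}(P)$, $\Sigma(\sigma)=\{a:\sigma(a)\ne a\}$. For finite $Q$ and $r\ge2$: $\sigma\in\mathrm{Aut}(P)$ is a $(Q,r)$-generator if there exist subsets $S_0,\dots,S_{r-1}\subset\Sigma(\sigma)$, each isomorphic to $Q$, which are smallest maximally ordered subsets of $\Sigma(\sigma)$ with $\sigma(S_i)=S_{(i+1)\bmod r}$, $\ell(S_i)=\ell(\Sigma(\sigma))$, $\bigcup_iS_i=\Sigma(\sigma)$;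 distinct $S_i,S_j$ are $(Q,r)$-symmetric subsets. Elements $a,b$ are $(Q,r,0)$-symmetric if $a=b$; $(Q,r,1)$-symmetric if there are $(Q,r)$-symmetric subsets $A,B$ with generator $\sigma$, $a\in A$, $b=\sigma^q(a)\in B$, $1\le q<r$; for $n\ge2$, $(Q,r,n)$-symmetric if not $(Q,r,j)$-symmetric for $j<n$ but there exist $c$, $j<n$ with $a$ $(Q,r,j)$-symmetric to $c$ and $c$ $(Q,r,n-j)$-symmetric to $b$; $(Q,r)$-symmetric if $(Q,r,n)$-symmetric for some $n\ge0$ (an equivalence relation). The retract $P\oslash_rQ$ is the quotient poset of the equivalence classes with $E\le F$ iff some $e\in E$, $f\in F$ satisfy $e\le f$. For a linked subset $A\cong Q$, the $(Q,r)$-symmetry group of $A$ is the largest subgroup of $\mathrm{Aut}(P)$ of $(Q,r)$-generators whose action fixes every $b\in P$ to which no $a\in A$ is $(Q,r)$-symmetric; the $(Q,r)$-symmetry set of $A$ is the set of elements not fixed by this group. The $(Q,r)$-symmetry of a $(Q,r)$-symmetry set $S$ is composite if there exist a finite poset $\hat Q$, $\hat r\ge2$ and a $(\hat Q,\hat r)$-symmetry set $\hat S\subseteq S$ with either $\hat Q$ a proper subposet of $Q$, or $\hat Q=Q$ and $\hat r<r$; it is prime otherwise. $P\oslash'_rQ$ is the retraction using only prime $(Q,r)$-symmetries, and $[R\odot_rQ]'=\{P:P\oslash'_rQ\cong R,\ P\not\cong R\}$; for $r=2$ the index is dropped. *)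

theory Defs
  imports Main
begin

definition finite_poset :: "'a set \<Rightarrow> ('a \<Rightarrow> 'a \<Rightarrow> bool) \<Rightarrow> bool" where
  "finite_poset S le \<longleftrightarrow> finite S \<and>
     (\<forall>a\<in>S. le a a) \<and>
     (\<forall>a\<in>S. \<forall>b\<in>S. le a b \<and> le b a \<longrightarrow> a = b) \<and>
     (\<forall>a\<in>S. \<forall>b\<in>S. \<forall>c\<in>S. le a b \<and> le b c \<longrightarrow> le a c)"

definition lt_of :: "('a \<Rightarrow> 'a \<Rightarrow> bool) \<Rightarrow> 'a \<Rightarrow> 'a \<Rightarrow> bool" where
  "lt_of le a b \<longleftrightarrow> le a b \<and> a \<noteq> b"

definition poset_iso :: "'a set \<Rightarrow> ('a \<Rightarrow> 'a \<Rightarrow> bool) \<Rightarrow> 'b set \<Rightarrow> ('b \<Rightarrow> 'b \<Rightarrow> bool) \<Rightarrow> bool" where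
  "poset_iso S1 le1 S2 le2 \<longleftrightarrow>
     (\<exists>f. bij_betw f S1 S2 \<and> (\<forall>a\<in>S1. \<forall>b\<in>S1. le1 a b \<longleftrightarrow> le2 (f a) (f b)))"

definition poset_aut :: "'a set \<Rightarrow> ('a \<Rightarrow> 'a \<Rightarrow> bool) \<Rightarrow> ('a \<Rightarrow> 'a) \<Rightarrow> bool" where
  "poset_aut S le \<sigma> \<longleftrightarrow> bij_betw \<sigma> S S \<and> (\<forall>a\<in>S. \<forall>b\<in>S. le a b \<longleftrightarrow> le (\<sigma> a) (\<sigma> b))
     \<and> (\<forall>a. a \<notin> S \<longrightarrow> \<sigma> a = a)"

definition support :: "'a set \<Rightarrow> ('a \<Rightarrow> 'a) \<Rightarrow> 'a set" where
  "support S \<sigma> = {a\<in>S. \<sigma> a \<noteq> a}"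

definition chain_len :: "('a \<Rightarrow> 'a \<Rightarrow> bool) \<Rightarrow> 'a set \<Rightarrow> nat" where
  "chain_len le X = Max {card C | C. C \<subseteq> X \<and> (\<forall>x\<in>C. \<forall>y\<in>C. le x y \<or> le y x)}"

definition npairs :: "('a \<Rightarrow> 'a \<Rightarrow> bool) \<Rightarrow> 'a set \<Rightarrow> nat" where
  "npairs le A = card {(a, b). a \<in> A \<and> b \<in> A \<and> lt_of le a b}"

definition max_ordered :: "('a \<Rightarrow> 'a \<Rightarrow> bool) \<Rightarrow> 'a set \<Rightarrow> 'a set \<Rightarrow> bool" where
  "max_ordered le X A \<longleftrightarrow> A \<subseteq> X \<and>
     (\<forall>B. B \<subseteq> X \<and> card B = card A \<longrightarrow> npairs le B \<le> npairs le A)"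

definition covers :: "'a set \<Rightarrow> ('a \<Rightarrow> 'a \<Rightarrow> bool) \<Rightarrow> 'a \<Rightarrow> 'a \<Rightarrow> bool" where
  "covers S le a b \<longleftrightarrow> lt_of le a b \<and> \<not> (\<exists>c\<in>S. lt_of le a c \<and> lt_of le c b)"

definition linked :: "'a set \<Rightarrow> ('a \<Rightarrow> 'a \<Rightarrow> bool) \<Rightarrow> 'a set \<Rightarrow> bool" where
  "linked S le A \<longleftrightarrow> A \<subseteq> S \<and>
     (\<forall>a\<in>A. \<forall>b\<in>A. lt_of le a b \<longrightarrow>
        covers S le a b \<or> (\<exists>c\<in>A. lt_of le a c \<and> lt_of le c b))"

text \<open>Conditions on a cyclic family T 0, ..., T (r-1) of subsets of \<open>\<Sigma>(\<sigma>)\<close>, except isomorphism to Q.\<close>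
definition cyc_family :: "'a set \<Rightarrow> ('a \<Rightarrow> 'a \<Rightarrow> bool) \<Rightarrow> nat \<Rightarrow> ('a \<Rightarrow> 'a) \<Rightarrow> (nat \<Rightarrow> 'a set) \<Rightarrow> bool" where
  "cyc_family S le r \<sigma> T \<longleftrightarrow>
     (\<forall>i<r. T i \<subseteq> support S \<sigma> \<and> max_ordered le (support S \<sigma>) (T i)
            \<and> \<sigma> ` T i = T (Suc i mod r)
            \<and> chain_len le (T i) = chain_len le (support S \<sigma>))
     \<and> (\<Union>i<r. T i) = support S \<sigma>"

definition generator_fam ::
  "'a set \<Rightarrow> ('a \<Rightarrow> 'a \<Rightarrow> bool) \<Rightarrow> 'b set \<Rightarrow> ('b \<Rightarrow> 'b \<Rightarrow> bool) \<Rightarrow> nat \<Rightarrow> ('a \<Rightarrow> 'a) \<Rightarrow> (nat \<Rightarrow> 'a set) \<Rightarrow> bool" where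
  "generator_fam S le SQ leQ r \<sigma> T \<longleftrightarrow>
     2 \<le> r \<and> poset_aut S le \<sigma> \<and> cyc_family S le r \<sigma> T
     \<and> (\<forall>i<r. poset_iso (T i) le SQ leQ)
     \<and> \<not> (\<exists>U. cyc_family S le r \<sigma> U \<and> card (U 0) < card SQ)"

definition generator ::
  "'a set \<Rightarrow> ('a \<Rightarrow> 'a \<Rightarrow> bool) \<Rightarrow> 'b set \<Rightarrow> ('b \<Rightarrow> 'b \<Rightarrow> bool) \<Rightarrow> nat \<Rightarrow> ('a \<Rightarrow> 'a) \<Rightarrow> bool" where
  "generator S le SQ leQ r \<sigma> \<longleftrightarrow> (\<exists>T. generator_fam S le SQ leQ r \<sigma> T)"

definition sym1_via ::
  "'a set \<Rightarrow> ('a \<Rightarrow> 'a \<Rightarrow> bool) \<Rightarrow> 'b set \<Rightarrow> ('b \<Rightarrow> 'b \<Rightarrow> bool) \<Rightarrow> nat \<Rightarrow> ('a \<Rightarrow> 'a) \<Rightarrow> 'a \<Rightarrow> 'a \<Rightarrow> bool" where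
  "sym1_via S le SQ leQ r \<sigma> a b \<longleftrightarrow>
     (\<exists>T i j q. generator_fam S le SQ leQ r \<sigma> T \<and> i < r \<and> j < r \<and> T i \<noteq> T j
        \<and> a \<in> T i \<and> b \<in> T j \<and> 1 \<le> q \<and> q < r \<and> b = (\<sigma> ^^ q) a)"

definition sym1 :: "'a set \<Rightarrow> ('a \<Rightarrow> 'a \<Rightarrow> bool) \<Rightarrow> 'b set \<Rightarrow> ('b \<Rightarrow> 'b \<Rightarrow> bool) \<Rightarrow> nat \<Rightarrow> 'a \<Rightarrow> 'a \<Rightarrow> bool" where
  "sym1 S le SQ leQ r a b \<longleftrightarrow> (\<exists>\<sigma>. sym1_via S le SQ leQ r \<sigma> a b)"

text \<open>(Q,r)-symmetric elements: (Q,r,n)-symmetric for some n, i.e. the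
  reflexive-transitive closure of the (Q,r,1) relation.\<close>
definition qr_sym :: "'a set \<Rightarrow> ('a \<Rightarrow> 'a \<Rightarrow> bool) \<Rightarrow> 'b set \<Rightarrow> ('b \<Rightarrow> 'b \<Rightarrow> bool) \<Rightarrow> nat \<Rightarrow> 'a \<Rightarrow> 'a \<Rightarrow> bool" where
  "qr_sym S le SQ leQ r = (sym1 S le SQ leQ r)\<^sup>*\<^sup>*"

text \<open>The (Q,r)-generators belonging to the (Q,r)-symmetry group of A (those fixing every
  b to which no a in A is (Q,r)-symmetric); the group is the one generated by them.\<close>
definition sym_gens :: "'a set \<Rightarrow> ('a \<Rightarrow> 'a \<Rightarrow> bool) \<Rightarrow> 'b set \<Rightarrow> ('b \<Rightarrow> 'b \<Rightarrow> bool) \<Rightarrow> nat \<Rightarrow> 'a set \<Rightarrow> ('a \<Rightarrow> 'a) set" where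
  "sym_gens S le SQ leQ r A =
     {\<sigma>. generator S le SQ leQ r \<sigma> \<and>
          (\<forall>b\<in>S. \<not> (\<exists>a\<in>A. qr_sym S le SQ leQ r a b) \<longrightarrow> \<sigma> b = b)}"

text \<open>Elements not fixed by the group generated by \<open>sym_gens\<close> (= moved by some generator).\<close>
definition sym_set_of :: "'a set \<Rightarrow> ('a \<Rightarrow> 'a \<Rightarrow> bool) \<Rightarrow> 'b set \<Rightarrow> ('b \<Rightarrow> 'b \<Rightarrow> bool) \<Rightarrow> nat \<Rightarrow> 'a set \<Rightarrow> 'a set" where
  "sym_set_of S le SQ leQ r A = {x\<in>S. \<exists>\<sigma>\<in>sym_gens S le SQ leQ r A. \<sigma> x \<noteq> x}"

definition is_sym_set :: "'a set \<Rightarrow> ('a \<Rightarrow> 'a \<Rightarrow> bool) \<Rightarrow> 'b set \<Rightarrow> ('b \<Rightarrow> 'b \<Rightarrow> bool) \<Rightarrow> nat \<Rightarrow> 'a set \<Rightarrow> bool" where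
  "is_sym_set S le SQ leQ r X \<longleftrightarrow>
     (\<exists>A. linked S le A \<and> poset_iso A le SQ leQ \<and> X = sym_set_of S le SQ leQ r A)"

text \<open>Composite: some nonempty (Q',r')-symmetry set inside X, with Q' (a subposet of Q, up to
  isomorphism) proper, or Q' = Q and r' < r.\<close>
definition composite_sym :: "'a set \<Rightarrow> ('a \<Rightarrow> 'a \<Rightarrow> bool) \<Rightarrow> 'b set \<Rightarrow> ('b \<Rightarrow> 'b \<Rightarrow> bool) \<Rightarrow> nat \<Rightarrow> 'a set \<Rightarrow> bool" where
  "composite_sym S le SQ leQ r X \<longleftrightarrow>
     (\<exists>SQ' r' X'. SQ' \<subseteq> SQ \<and> 2 \<le> r' \<and> is_sym_set S le SQ' leQ r' X' \<and> X' \<subseteq> X \<and> X' \<noteq> {}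
        \<and> (SQ' \<subset> SQ \<or> (SQ' = SQ \<and> r' < r)))"

definition prime_sym_set :: "'a set \<Rightarrow> ('a \<Rightarrow> 'a \<Rightarrow> bool) \<Rightarrow> 'b set \<Rightarrow> ('b \<Rightarrow> 'b \<Rightarrow> bool) \<Rightarrow> nat \<Rightarrow> 'a set \<Rightarrow> 'a set \<Rightarrow> bool" where
  "prime_sym_set S le SQ leQ r A X \<longleftrightarrow>
     linked S le A \<and> poset_iso A le SQ leQ \<and> X = sym_set_of S le SQ leQ r A
     \<and> \<not> composite_sym S le SQ leQ r X"

definition sym1_prime :: "'a set \<Rightarrow> ('a \<Rightarrow> 'a \<Rightarrow> bool) \<Rightarrow> 'b set \<Rightarrow> ('b \<Rightarrow> 'b \<Rightarrow> bool) \<Rightarrow> nat \<Rightarrow> 'a \<Rightarrow> 'a \<Rightarrow> bool" where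
  "sym1_prime S le SQ leQ r a b \<longleftrightarrow>
     (\<exists>A X \<sigma>. prime_sym_set S le SQ leQ r A X \<and> \<sigma> \<in> sym_gens S le SQ leQ r A
        \<and> sym1_via S le SQ leQ r \<sigma> a b)"

definition prime_sym_rel :: "'a set \<Rightarrow> ('a \<Rightarrow> 'a \<Rightarrow> bool) \<Rightarrow> 'b set \<Rightarrow> ('b \<Rightarrow> 'b \<Rightarrow> bool) \<Rightarrow> nat \<Rightarrow> 'a rel" where
  "prime_sym_rel S le SQ leQ r =
     {(a, b). a \<in> S \<and> b \<in> S \<and> (sym1_prime S le SQ leQ r)\<^sup>*\<^sup>* a b}"

definition retract'_carrier :: "'a set \<Rightarrow> ('a \<Rightarrow> 'a \<Rightarrow> bool) \<Rightarrow> 'b set \<Rightarrow> ('b \<Rightarrow> 'b \<Rightarrow> bool) \<Rightarrow> nat \<Rightarrow> 'a set set" where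
  "retract'_carrier S le SQ leQ r = S // prime_sym_rel S le SQ leQ r"

definition quot_le :: "('a \<Rightarrow> 'a \<Rightarrow> bool) \<Rightarrow> 'a set \<Rightarrow> 'a set \<Rightarrow> bool" where
  "quot_le le E F \<longleftrightarrow> (\<exists>e\<in>E. \<exists>f\<in>F. le e f)"

definition in_odot' :: "'a set \<Rightarrow> ('a \<Rightarrow> 'a \<Rightarrow> bool) \<Rightarrow> 'c set \<Rightarrow> ('c \<Rightarrow> 'c \<Rightarrow> bool)
     \<Rightarrow> 'b set \<Rightarrow> ('b \<Rightarrow> 'b \<Rightarrow> bool) \<Rightarrow> nat \<Rightarrow> bool" where
  "in_odot' S le SR leR SQ leQ r \<longleftrightarrow>
     poset_iso (retract'_carrier S le SQ leQ r) (quot_le le) SR leR \<and> \<not> poset_iso S le SR leR"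

definition C2_carrier :: "bool set" where "C2_carrier = UNIV"
definition C2_le :: "bool \<Rightarrow> bool \<Rightarrow> bool" where "C2_le x y \<longleftrightarrow> x \<le> y"

definition parC2_carrier :: "nat \<Rightarrow> (nat \<times> bool) set" where
  "parC2_carrier n = {..<n} \<times> UNIV"
definition parC2_le :: "nat \<times> bool \<Rightarrow> nat \<times> bool \<Rightarrow> bool" where
  "parC2_le p q \<longleftrightarrow> fst p = fst q \<and> snd p \<le> snd q"

definition crown_carrier :: "nat \<Rightarrow> (nat \<times> bool) set" where
  "crown_carrier n = {..<n} \<times> UNIV"
definition crown_le :: "nat \<times> bool \<Rightarrow> nat \<times> bool \<Rightarrow> bool" where
  "crown_le p q \<longleftrightarrow> p = q \<or> (\<not> snd p \<and> snd q \<and> fst p \<noteq> fst q)"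

end

theory Submission
  imports Defs
begin


section \<open>Abstract combinatorics of swap generators\<close>

definition gen :: "'a set \<Rightarrow> 'a set \<Rightarrow> ('a \<Rightarrow> 'a \<Rightarrow> bool) \<Rightarrow> 'a \<Rightarrow> 'a \<Rightarrow> 'a \<Rightarrow> 'a \<Rightarrow> bool" where
  "gen E F R a a' b b' \<longleftrightarrow> a \<in> E \<and> a' \<in> E \<and> b \<in> F \<and> b' \<in> F \<and> a \<noteq> a' \<and> b \<noteq> b' \<and>
     R a b \<and> R a' b' \<and> \<not> R a b' \<and> \<not> R a' b \<and>
     (\<forall>x\<in>E. x \<noteq> a \<longrightarrow> x \<noteq> a' \<longrightarrow> (R x b \<longleftrightarrow> R x b')) \<and>
     (\<forall>y\<in>F. y \<noteq> b \<longrightarrow> y \<noteq> b' \<longrightarrow> (R a y \<longleftrightarrow> R a' y))"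

definition sw :: "'a \<Rightarrow> 'a \<Rightarrow> 'a \<Rightarrow> 'a" where
  "sw u v x = (if x = u then v else if x = v then u else x)"

lemma sw_sw[simp]: "sw u v (sw u v x) = x"
  by (simp add: sw_def)


lemma sw_eq: "sw u v x = z \<longleftrightarrow> x = sw u v z"
  by (auto simp: sw_def)

lemma gen_sym: "gen E F R a a' b b' \<Longrightarrow> gen E F R a' a b' b"
  unfolding gen_def by blast

lemma gen_dual: "gen E F R a a' b b' \<longleftrightarrow> gen F E (\<lambda>x y. R y x) b b' a a'"
  unfolding gen_def by (rule iffI; elim conjE; intro conjI; assumption)


lemma gen_facts:
  assumes "gen E F R a a' b b'"
  shows "a \<in> E" "a' \<in> E" "b \<in> F" "b' \<in> F" "a \<noteq> a'" "b \<noteq> b'" "R a b" "R a' b'" "\<not> R a b'" "\<not> R a' b"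
    "\<And>x. x\<in>E \<Longrightarrow> x\<noteq>a \<Longrightarrow> x\<noteq>a' \<Longrightarrow> R x b \<longleftrightarrow> R x b'"
    "\<And>y. y\<in>F \<Longrightarrow> y\<noteq>b \<Longrightarrow> y\<noteq>b' \<Longrightarrow> R a y \<longleftrightarrow> R a' y"
  using assms unfolding gen_def by blast+

lemma gen_inv:
  assumes g: "gen E F R a a' b b'" and x: "x \<in> E" and y: "y \<in> F"
  shows "R x y \<longleftrightarrow> R (sw a a' x) (sw b b' y)"
proof -
  note G = gen_facts[OF g]
  consider "x = a" | "x = a'" | "x \<noteq> a \<and> x \<noteq> a'" by blast
  then show ?thesis
  proof cases
    case 1
    then have sx: "sw a a' x = a'" by (simp add: sw_def)
    consider "y = b" | "y = b'" | "y \<noteq> b \<and> y \<noteq> b'" by blast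
    then show ?thesis
    proof cases
      case 1 then show ?thesis using sx G(7,8) \<open>x = a\<close> by (simp add: sw_def)
    next
      case 2 then show ?thesis using sx G(6,9,10) \<open>x = a\<close> by (simp add: sw_def)
    next
      case 3 then have "sw b b' y = y" by (simp add: sw_def)
      then show ?thesis using sx G(12)[of y] 3 y \<open>x = a\<close> by simp
    qed
  next
    case 2
    then have sx: "sw a a' x = a" using G(5) by (simp add: sw_def)
    consider "y = b" | "y = b'" | "y \<noteq> b \<and> y \<noteq> b'" by blast
    then show ?thesis
    proof cases
      case 1 then show ?thesis using sx G(6,9,10) \<open>x = a'\<close> by (simp add: sw_def)
    next
      case 2 then show ?thesis using sx G(6,7,8) \<open>x = a'\<close> by (simp add: sw_def)
    next
      case 3 then have "sw b b' y = y" by (simp add: sw_def)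
      then show ?thesis using sx G(12)[of y] 3 y \<open>x = a'\<close> by simp
    qed
  next
    case 3
    then have sx: "sw a a' x = x" by (simp add: sw_def)
    consider "y = b" | "y = b'" | "y \<noteq> b \<and> y \<noteq> b'" by blast
    then show ?thesis
    proof cases
      case 1 then show ?thesis using sx G(11)[of x] 3 x by (simp add: sw_def)
    next
      case 2 then show ?thesis using sx G(6) G(11)[of x] 3 x by (simp add: sw_def)
    next
      case 3 then have "sw b b' y = y" by (simp add: sw_def)
      then show ?thesis using sx by simp
    qed
  qed
qed
lemma gen_trans:
  assumes g1: "gen E F R a a1 b b1" and g2: "gen E F R a1 a2 c c2" and ne: "a \<noteq> a2"
  shows "\<exists>d d2. gen E F R a a2 d d2"
proof -
  note G1 = gen_facts[OF g1] and G2 = gen_facts[OF g2]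
  have a2: "a2 \<noteq> a1" "a2 \<in> E" "a \<in> E" "a1 \<in> E" using G1(1,2) G2(2,5) by auto
  have inv: "\<And>x y. x \<in> E \<Longrightarrow> y \<in> F \<Longrightarrow> R x y \<longleftrightarrow> R (sw a a1 x) (sw b b1 y)"
    using gen_inv[OF g1] by blast
  have bF: "b \<in> F" "b1 \<in> F" "c \<in> F" "c2 \<in> F" "c \<noteq> c2" using G1(3,4) G2(3,4,6) by auto
  have tF: "\<And>y. y \<in> F \<Longrightarrow> sw b b1 y \<in> F" using bF by (simp add: sw_def)
  have sE: "\<And>x. x \<in> E \<Longrightarrow> sw a a1 x \<in> E" using a2 by (simp add: sw_def)
  have sa2: "sw a a1 a2 = a2" using a2 ne by (simp add: sw_def)
  have sa: "sw a a1 a = a1" by (simp add: sw_def)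
  let ?d = "sw b b1 c" and ?d2 = "sw b b1 c2"
  have dF: "?d \<in> F" "?d2 \<in> F" using tF bF by auto
  have "gen E F R a a2 ?d ?d2"
    unfolding gen_def
  proof (intro conjI ballI impI)
    show "a \<in> E" "a2 \<in> E" "?d \<in> F" "?d2 \<in> F" "a \<noteq> a2" using a2 dF ne by auto
    show "?d \<noteq> ?d2" using bF(5) by (simp add: sw_eq)
    show "R a ?d" using inv[OF a2(3) dF(1)] sa G2(7) by simp
    show "R a2 ?d2" using inv[OF a2(2) dF(2)] sa2 G2(8) by simp
    show "\<not> R a ?d2" using inv[OF a2(3) dF(2)] sa G2(9) by simp
    show "\<not> R a2 ?d" using inv[OF a2(2) dF(1)] sa2 G2(10) by simp
  next
    fix x assume x: "x \<in> E" "x \<noteq> a" "x \<noteq> a2"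
    have sx: "sw a a1 x \<in> E" "sw a a1 x \<noteq> a1" "sw a a1 x \<noteq> a2"
      using x a2 G1(5) ne by (auto simp: sw_def)
    have "R (sw a a1 x) c \<longleftrightarrow> R (sw a a1 x) c2" using G2(11)[OF sx] .
    moreover have "R x ?d \<longleftrightarrow> R (sw a a1 x) c" using inv[OF x(1) dF(1)] by simp
    moreover have "R x ?d2 \<longleftrightarrow> R (sw a a1 x) c2" using inv[OF x(1) dF(2)] by simp
    ultimately show "R x ?d \<longleftrightarrow> R x ?d2" by blast
  next
    fix y assume y: "y \<in> F" "y \<noteq> ?d" "y \<noteq> ?d2"
    have ty1: "sw b b1 y \<in> F" using y tF by blast
    have ty2: "sw b b1 y \<noteq> c" using y(2) sw_eq by metis
    have ty3: "sw b b1 y \<noteq> c2" using y(3) sw_eq by metis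
    note ty = ty1 ty2 ty3
    have "R a1 (sw b b1 y) \<longleftrightarrow> R a2 (sw b b1 y)" using G2(12)[OF ty] .
    moreover have "R a y \<longleftrightarrow> R a1 (sw b b1 y)" using inv[OF a2(3) y(1)] sa by simp
    moreover have "R a2 y \<longleftrightarrow> R a2 (sw b b1 y)" using inv[OF a2(2) y(1)] sa2 by simp
    ultimately show "R a y \<longleftrightarrow> R a2 y" by blast
  qed
  then show ?thesis by blast
qed

lemma gen_trans_F:
  assumes g1: "gen E F R a a1 b b1" and g2: "gen E F R c c2 b1 b2" and ne: "b \<noteq> b2"
  shows "\<exists>d d2. gen E F R d d2 b b2"
proof -
  have "gen F E (\<lambda>x y. R y x) b b1 a a1" "gen F E (\<lambda>x y. R y x) b1 b2 c c2"
    using g1 g2 gen_dual by metis+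
  from gen_trans[OF this ne] obtain d d2 where "gen F E (\<lambda>x y. R y x) b b2 d d2" by blast
  then have "gen E F R d d2 b b2" using gen_dual by metis
  then show ?thesis by blast
qed

lemma gen_L:
  assumes g: "gen E F R a a' b b'" and c: "c \<in> F" "R a c" "c \<noteq> b"
    and HF: "\<And>b1 b2. b1 \<in> F \<Longrightarrow> b2 \<in> F \<Longrightarrow> b1 \<noteq> b2 \<Longrightarrow> \<exists>u u'. gen E F R u u' b1 b2"
  shows "\<forall>z\<in>F. R a z \<or> R a' z"
proof (rule ccontr)
  assume "\<not> ?thesis"
  then obtain z where z: "z \<in> F" "\<not> R a z" "\<not> R a' z" by blast
  note gg = gen_facts[OF g]
  have cb': "c \<noteq> b'" using c gg(9) by auto
  have a'c: "R a' c" using gg(12)[OF c(1) c(3) cb'] c(2) by simp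
  obtain u u' where gu: "gen E F R u u' b c" using HF[OF gg(3) c(1)] c(3) by metis
  note gu' = gen_facts[OF gu]
  have u'a': "u' = a'"
  proof (rule ccontr)
    assume ne: "u' \<noteq> a'"
    have "a' \<noteq> u" using gu'(7) gg(10) by auto
    then have "R a' b \<longleftrightarrow> R a' c" using gu'(11)[OF gg(2)] ne by simp
    then show False using gg(10) a'c by simp
  qed
  have ua: "u \<noteq> a" using gu'(9) c(2) by auto
  have zb: "z \<noteq> b" using z(2) gg(7) by auto
  have zc: "z \<noteq> c" using z(2) c(2) by auto
  have uz: "\<not> R u z" using gu'(12)[OF z(1) zb zc] z(3) u'a' by simp
  have b'b: "b' \<noteq> b" using gg(6) by simp
  have ub': "R u b'" using gu'(12)[OF gg(4) b'b cb'[symmetric]] gg(8) u'a' by simp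
  have zb': "z \<noteq> b'" using z(3) gg(8) by auto
  obtain v v' where gv: "gen E F R v v' b' z" using HF[OF gg(4) z(1)] zb'[symmetric] by metis
  note gv' = gen_facts[OF gv]
  have va': "v = a'"
  proof (rule ccontr)
    assume ne: "v \<noteq> a'"
    have "a' \<noteq> v'" using gv'(8) z(3) by auto
    then have "R a' b' \<longleftrightarrow> R a' z" using gv'(11)[OF gg(2)] ne by simp
    then show False using gg(8) z(3) by simp
  qed
  have vu: "v = u"
  proof (rule ccontr)
    assume ne: "v \<noteq> u"
    have "u \<noteq> v'" using gv'(8) uz by auto
    then have "R u b' \<longleftrightarrow> R u z" using gv'(11)[OF gu'(1)] ne by simp
    then show False using ub' uz by simp
  qed
  show False using va' vu u'a' gu'(5) by simp
qed

lemma gen_classify: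
  assumes HE: "\<And>a1 a2. a1 \<in> E \<Longrightarrow> a2 \<in> E \<Longrightarrow> a1 \<noteq> a2 \<Longrightarrow> \<exists>b b'. gen E F R a1 a2 b b'"
    and HF: "\<And>b1 b2. b1 \<in> F \<Longrightarrow> b2 \<in> F \<Longrightarrow> b1 \<noteq> b2 \<Longrightarrow> \<exists>u u'. gen E F R u u' b1 b2"
    and two: "a0 \<in> E" "a0' \<in> E" "a0 \<noteq> a0'"
  shows "((\<forall>x\<in>E. \<exists>!y. y \<in> F \<and> R x y) \<and> (\<forall>y\<in>F. \<exists>!x. x \<in> E \<and> R x y)) \<or>
         ((\<forall>x\<in>E. \<exists>!y. y \<in> F \<and> \<not> R x y) \<and> (\<forall>y\<in>F. \<exists>!x. x \<in> E \<and> \<not> R x y))"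
proof -
  obtain b0 b0' where g0: "gen E F R a0 a0' b0 b0'" using HE two by blast
  note g0' = gen_facts[OF g0]
  show ?thesis
  proof (cases "\<exists>c\<in>F. R a0 c \<and> c \<noteq> b0")
    case True
    then obtain c where c: "c \<in> F" "R a0 c" "c \<noteq> b0" by blast
    have cov: "\<forall>z\<in>F. R a0 z \<or> R a0' z" using gen_L[OF g0 c HF] by blast
    have Na0: "R a0 z \<longleftrightarrow> z \<noteq> b0'" if z: "z \<in> F" for z
    proof (cases "z = b0 \<or> z = b0'")
      case True then show ?thesis using g0'(6,7,9) by auto
    next
      case False
      then have "R a0 z \<longleftrightarrow> R a0' z" using g0'(12)[OF z] by simp
      then show ?thesis using cov z False by auto
    qed
    have rows: "\<forall>x\<in>E. \<exists>!y. y \<in> F \<and> \<not> R x y"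
    proof
      fix x assume x: "x \<in> E"
      show "\<exists>!y. y \<in> F \<and> \<not> R x y"
      proof (cases "x = a0")
        case True then show ?thesis using Na0 g0'(4) by metis
      next
        case False
        obtain b b' where g: "gen E F R a0 x b b'" using HE[OF two(1) x] False by metis
        note gg = gen_facts[OF g]
        have bb: "b' = b0'" using Na0[OF gg(4)] gg(9) by simp
        have un: "y = b" if "y \<in> F" "\<not> R x y" for y
        proof (rule ccontr)
          assume yb: "y \<noteq> b"
          have yb': "y \<noteq> b'" using that gg(8) by auto
          have "R a0 y \<longleftrightarrow> R x y" using gg(12)[OF that(1) yb yb'] .
          then show False using Na0[OF that(1)] bb yb' that(2) by simp
        qed
        show ?thesis using gg(3,10) un by blast
      qed
    qed
    have cols: "\<forall>y\<in>F. \<exists>!x. x \<in> E \<and> \<not> R x y"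
    proof
      fix y assume y: "y \<in> F"
      have ex: "\<exists>x. x \<in> E \<and> \<not> R x y"
      proof (cases "y = b0")
        case True then show ?thesis using g0'(10) two by auto
      next
        case False
        obtain u u' where "gen E F R u u' b0 y" using HF[OF g0'(3) y] False by metis
        from gen_facts[OF this] show ?thesis by blast
      qed
      have un: "x1 = x2" if xs: "x1 \<in> E" "\<not> R x1 y" "x2 \<in> E" "\<not> R x2 y" for x1 x2
      proof (rule ccontr)
        assume ne: "x1 \<noteq> x2"
        obtain b b' where g: "gen E F R x1 x2 b b'" using HE xs(1,3) ne by metis
        note gg = gen_facts[OF g]
        have "b = y" using rows xs(3,4) gg(3,10) y by metis
        then show False using gg(7) xs(2) by simp
      qed
      show "\<exists>!x. x \<in> E \<and> \<not> R x y" using ex un by blast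
    qed
    show ?thesis using rows cols by blast
  next
    case False
    then have Na0: "R a0 z \<longleftrightarrow> z = b0" if "z \<in> F" for z using g0'(7) that by metis
    have rows: "\<forall>x\<in>E. \<exists>!y. y \<in> F \<and> R x y"
    proof
      fix x assume x: "x \<in> E"
      show "\<exists>!y. y \<in> F \<and> R x y"
      proof (cases "x = a0")
        case True then show ?thesis using Na0 g0'(3) by metis
      next
        case False
        obtain b b' where g: "gen E F R a0 x b b'" using HE[OF two(1) x] False by metis
        note gg = gen_facts[OF g]
        have bb: "b = b0" using Na0[OF gg(3)] gg(7) by simp
        have un: "y = b'" if "y \<in> F" "R x y" for y
        proof (rule ccontr)
          assume yb': "y \<noteq> b'"
          have yb: "y \<noteq> b" using that gg(10) by auto
          have "R a0 y \<longleftrightarrow> R x y" using gg(12)[OF that(1) yb yb'] .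
          then show False using Na0[OF that(1)] bb yb that(2) by simp
        qed
        show ?thesis using gg(4,8) un by blast
      qed
    qed
    have cols: "\<forall>y\<in>F. \<exists>!x. x \<in> E \<and> R x y"
    proof
      fix y assume y: "y \<in> F"
      have ex: "\<exists>x. x \<in> E \<and> R x y"
      proof (cases "y = b0")
        case True then show ?thesis using g0'(7) two by auto
      next
        case False
        obtain u u' where "gen E F R u u' b0 y" using HF[OF g0'(3) y] False by metis
        from gen_facts[OF this] show ?thesis by blast
      qed
      have un: "x1 = x2" if xs: "x1 \<in> E" "R x1 y" "x2 \<in> E" "R x2 y" for x1 x2
      proof (rule ccontr)
        assume ne: "x1 \<noteq> x2"
        obtain b b' where g: "gen E F R x1 x2 b b'" using HE xs(1,3) ne by metis
        note gg = gen_facts[OF g]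
        have "b = y" using rows xs(1,2) gg(3,7) y by metis
        then show False using gg(10) xs(4) by simp
      qed
      show "\<exists>!x. x \<in> E \<and> R x y" using ex un by blast
    qed
    show ?thesis using rows cols by blast
  qed
qed



locale fposet =
  fixes S :: "'a set" and le :: "'a \<Rightarrow> 'a \<Rightarrow> bool"
  assumes fp: "finite_poset S le"
begin

lemma finS: "finite S" using fp unfolding finite_poset_def by blast
lemma refl: "a \<in> S \<Longrightarrow> le a a" using fp unfolding finite_poset_def by blast
lemma antisym: "a \<in> S \<Longrightarrow> b \<in> S \<Longrightarrow> le a b \<Longrightarrow> le b a \<Longrightarrow> a = b"
  using fp unfolding finite_poset_def by blast
lemma trans: "a \<in> S \<Longrightarrow> b \<in> S \<Longrightarrow> c \<in> S \<Longrightarrow> le a b \<Longrightarrow> le b c \<Longrightarrow> le a c"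
  using fp unfolding finite_poset_def by blast

lemma aut_bij: "poset_aut S le \<sigma> \<Longrightarrow> bij_betw \<sigma> S S" unfolding poset_aut_def by blast
lemma aut_S: "poset_aut S le \<sigma> \<Longrightarrow> x \<in> S \<Longrightarrow> \<sigma> x \<in> S"
  using aut_bij bij_betw_apply by metis
lemma aut_inj: "poset_aut S le \<sigma> \<Longrightarrow> x \<in> S \<Longrightarrow> y \<in> S \<Longrightarrow> \<sigma> x = \<sigma> y \<longleftrightarrow> x = y"
  using aut_bij unfolding bij_betw_def inj_on_def by metis
lemma aut_le: "poset_aut S le \<sigma> \<Longrightarrow> x \<in> S \<Longrightarrow> y \<in> S \<Longrightarrow> le (\<sigma> x) (\<sigma> y) \<longleftrightarrow> le x y"
  unfolding poset_aut_def by blast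
lemma aut_lt: "poset_aut S le \<sigma> \<Longrightarrow> x \<in> S \<Longrightarrow> y \<in> S \<Longrightarrow> lt_of le (\<sigma> x) (\<sigma> y) \<longleftrightarrow> lt_of le x y"
  unfolding lt_of_def using aut_le aut_inj by metis
lemma aut_out: "poset_aut S le \<sigma> \<Longrightarrow> x \<notin> S \<Longrightarrow> \<sigma> x = x"
  unfolding poset_aut_def by blast
lemma aut_surj: "poset_aut S le \<sigma> \<Longrightarrow> y \<in> S \<Longrightarrow> \<exists>x\<in>S. \<sigma> x = y"
  using aut_bij unfolding bij_betw_def by (metis imageE)

definition dn :: "'a \<Rightarrow> nat" where "dn x = card {z\<in>S. le z x}"

lemma aut_dn:
  assumes s: "poset_aut S le \<sigma>" and x: "x \<in> S"
  shows "dn (\<sigma> x) = dn x"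
proof -
  have "{z\<in>S. le z (\<sigma> x)} = \<sigma> ` {z\<in>S. le z x}"
  proof
    show "{z\<in>S. le z (\<sigma> x)} \<subseteq> \<sigma> ` {z\<in>S. le z x}"
    proof
      fix w assume w: "w \<in> {z\<in>S. le z (\<sigma> x)}"
      then obtain z where z: "z \<in> S" "\<sigma> z = w" using aut_surj[OF s] by blast
      then have "le z x" using w aut_le[OF s z(1) x] by simp
      then show "w \<in> \<sigma> ` {z\<in>S. le z x}" using z by blast
    qed
    show "\<sigma> ` {z\<in>S. le z x} \<subseteq> {z\<in>S. le z (\<sigma> x)}"
      using aut_S[OF s] aut_le[OF s _ x] by blast
  qed
  moreover have "inj_on \<sigma> {z\<in>S. le z x}"
    using aut_inj[OF s] unfolding inj_on_def by blast
  ultimately show ?thesis unfolding dn_def by (simp add: card_image)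
qed

lemma lt_dn:
  assumes x: "x \<in> S" and y: "y \<in> S" and lt: "lt_of le x y"
  shows "dn x < dn y"
proof -
  have sub: "{z\<in>S. le z x} \<subseteq> {z\<in>S. le z y}" using trans x y lt unfolding lt_of_def by blast
  have "y \<notin> {z\<in>S. le z x}" using antisym x y lt unfolding lt_of_def by blast
  moreover have "y \<in> {z\<in>S. le z y}" using y refl by blast
  ultimately have "{z\<in>S. le z x} \<subset> {z\<in>S. le z y}" using sub by blast
  then show ?thesis unfolding dn_def by (rule psubset_card_mono[rotated]) (simp add: finS)
qed

lemma support_sub: "support S \<sigma> \<subseteq> S" unfolding support_def by blast

lemma gen_C2:
  assumes g: "generator_fam S le C2_carrier C2_le 2 \<sigma> T"
  shows "\<exists>p q. T 0 = {p, q} \<and> lt_of le p q \<and> T (Suc 0) = {\<sigma> p, \<sigma> q} \<and> \<sigma> (\<sigma> p) = p \<and> \<sigma> (\<sigma> q) = q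
     \<and> support S \<sigma> = T 0 \<union> T (Suc 0) \<and> poset_aut S le \<sigma> \<and> p \<in> S \<and> q \<in> S \<and> \<sigma> p \<noteq> p \<and> \<sigma> q \<noteq> q"
proof -
  have aut: "poset_aut S le \<sigma>" using g unfolding generator_fam_def by blast
  have cf: "cyc_family S le 2 \<sigma> T" using g unfolding generator_fam_def by blast
  have c0: "T 0 \<subseteq> support S \<sigma>" "\<sigma> ` T 0 = T (Suc 0)"
    using cf unfolding cyc_family_def by auto
  have c1: "T (Suc 0) \<subseteq> support S \<sigma>" "\<sigma> ` T (Suc 0) = T 0"
    using cf unfolding cyc_family_def by (auto dest: spec[of _ "Suc 0"])
  have un: "(\<Union>i<2. T i) = support S \<sigma>" using cf unfolding cyc_family_def by blast
  have "{..<2::nat} = {0, Suc 0}" by auto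
  then have sup: "support S \<sigma> = T 0 \<union> T (Suc 0)" using un by auto
  have "poset_iso (T 0) le C2_carrier C2_le" using g unfolding generator_fam_def by auto
  then obtain f :: "'a \<Rightarrow> bool" where f: "bij_betw f (T 0) UNIV" "\<And>a b. a \<in> T 0 \<Longrightarrow> b \<in> T 0 \<Longrightarrow> le a b \<longleftrightarrow> f a \<le> f b"
    unfolding poset_iso_def C2_carrier_def C2_le_def by blast
  obtain p where p: "p \<in> T 0" "f p = False" using f(1) unfolding bij_betw_def by (metis UNIV_I imageE)
  obtain q where q: "q \<in> T 0" "f q = True" using f(1) unfolding bij_betw_def by (metis UNIV_I imageE)
  have T0: "T 0 = {p, q}"
  proof
    show "T 0 \<subseteq> {p, q}"
    proof
      fix x assume x: "x \<in> T 0"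
      have "f x = f p \<or> f x = f q" using p q by (cases "f x") auto
      then show "x \<in> {p, q}" using f(1) x p q unfolding bij_betw_def inj_on_def by blast
    qed
  qed (use p q in auto)
  have pq: "le p q" "\<not> le q p" using f(2)[OF p(1) q(1)] f(2)[OF q(1) p(1)] p q by auto
  have ltpq: "lt_of le p q" using pq unfolding lt_of_def by auto
  have S: "p \<in> S" "q \<in> S" using p q c0(1) support_sub by auto
  have mv: "\<sigma> p \<noteq> p" "\<sigma> q \<noteq> q" using p q c0(1) unfolding support_def by auto
  have T1: "T (Suc 0) = {\<sigma> p, \<sigma> q}" using c0(2) T0 by auto
  have T0': "{\<sigma> (\<sigma> p), \<sigma> (\<sigma> q)} = {p, q}" using c1(2) T1 T0 by auto
  have lt2: "lt_of le (\<sigma> (\<sigma> p)) (\<sigma> (\<sigma> q))"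
    using aut_lt[OF aut] aut_S[OF aut] S ltpq by simp
  have pp: "\<sigma> (\<sigma> p) = p"
  proof (rule ccontr)
    assume ne: "\<sigma> (\<sigma> p) \<noteq> p"
    then have "\<sigma> (\<sigma> p) = q" using T0' by blast
    moreover have "\<sigma> (\<sigma> q) = q \<or> \<sigma> (\<sigma> q) = p" using T0' by blast
    ultimately show False using lt2 pq unfolding lt_of_def by auto
  qed
  have qq: "\<sigma> (\<sigma> q) = q"
  proof (rule ccontr)
    assume ne: "\<sigma> (\<sigma> q) \<noteq> q"
    then have "\<sigma> (\<sigma> q) = p" using T0' by blast
    then show False using lt2 pp unfolding lt_of_def by auto
  qed
  show ?thesis using T0 ltpq T1 pp qq sup aut S mv by blast
qed

lemma sym1_via_C2:
  assumes "sym1_via S le C2_carrier C2_le 2 \<sigma> x y"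
  shows "y = \<sigma> x \<and> x \<in> support S \<sigma> \<and> poset_aut S le \<sigma> \<and> \<sigma> (\<sigma> x) = x \<and> x \<in> S"
proof -
  obtain T i j q where t: "generator_fam S le C2_carrier C2_le 2 \<sigma> T" "i < 2" "j < 2" "T i \<noteq> T j"
    "x \<in> T i" "y \<in> T j" "1 \<le> q" "q < 2" "y = (\<sigma> ^^ q) x"
    using assms unfolding sym1_via_def by blast
  have q: "q = 1" using t(7,8) by simp
  obtain p r where pr: "T 0 = {p, r}" "T (Suc 0) = {\<sigma> p, \<sigma> r}" "\<sigma> (\<sigma> p) = p" "\<sigma> (\<sigma> r) = r"
     "support S \<sigma> = T 0 \<union> T (Suc 0)" "poset_aut S le \<sigma>"
    using gen_C2[OF t(1)] by blast
  have xi: "x \<in> T 0 \<union> T (Suc 0)" using t(2,5) by (cases i) auto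
  have "\<sigma> (\<sigma> x) = x" using xi pr by auto
  moreover have xs: "x \<in> support S \<sigma>" using xi pr(5) by simp
  moreover have "x \<in> S" using xs support_sub by blast
  ultimately show ?thesis using t(9) q pr(6) by simp
qed

lemma sym1_via_C2_sym:
  assumes "sym1_via S le C2_carrier C2_le 2 \<sigma> x y"
  shows "sym1_via S le C2_carrier C2_le 2 \<sigma> y x"
proof -
  obtain T i j q where t: "generator_fam S le C2_carrier C2_le 2 \<sigma> T" "i < 2" "j < 2" "T i \<noteq> T j"
    "x \<in> T i" "y \<in> T j" "1 \<le> q" "q < 2" "y = (\<sigma> ^^ q) x"
    using assms unfolding sym1_via_def by blast
  have yx: "y = \<sigma> x" "\<sigma> (\<sigma> x) = x" using sym1_via_C2[OF assms] by auto
  then have x1: "x = (\<sigma> ^^ 1) y" by simp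
  have tji: "T j \<noteq> T i" using t(4) by simp
  show ?thesis unfolding sym1_via_def
    apply (rule exI[of _ T], rule exI[of _ j], rule exI[of _ i], rule exI[of _ "1::nat"])
    using t(1,2,3,5,6) x1 tji by simp
qed

lemma sym1_prime_sym:
  assumes "sym1_prime S le C2_carrier C2_le 2 x y"
  shows "sym1_prime S le C2_carrier C2_le 2 y x"
proof -
  obtain A X \<sigma> where "prime_sym_set S le C2_carrier C2_le 2 A X" "\<sigma> \<in> sym_gens S le C2_carrier C2_le 2 A"
        "sym1_via S le C2_carrier C2_le 2 \<sigma> x y"
    using assms unfolding sym1_prime_def by blast
  then show ?thesis unfolding sym1_prime_def using sym1_via_C2_sym by blast
qed

lemma sym1_prime_aut:
  assumes "sym1_prime S le C2_carrier C2_le 2 x y"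
  shows "\<exists>\<sigma>. poset_aut S le \<sigma> \<and> y = \<sigma> x \<and> x \<in> S \<and> x \<noteq> y"
proof -
  obtain A X \<sigma> where "sym1_via S le C2_carrier C2_le 2 \<sigma> x y"
    using assms unfolding sym1_prime_def by blast
  from sym1_via_C2[OF this] have "y = \<sigma> x" "x \<in> support S \<sigma>" "poset_aut S le \<sigma>" "x \<in> S" by auto
  moreover then have "x \<noteq> y" unfolding support_def by auto
  ultimately show ?thesis by blast
qed

definition is_chain :: "'a set \<Rightarrow> bool" where
  "is_chain C \<longleftrightarrow> (\<forall>x\<in>C. \<forall>y\<in>C. le x y \<or> le y x)"

lemma chain_len_alt: "chain_len le X = Max {card C | C. C \<subseteq> X \<and> is_chain C}"
  unfolding chain_len_def is_chain_def by simp

lemma chain_len_eq: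
  assumes X: "finite X" and ex: "C0 \<subseteq> X" "is_chain C0" "card C0 = k"
    and bd: "\<And>C. C \<subseteq> X \<Longrightarrow> is_chain C \<Longrightarrow> card C \<le> k"
  shows "chain_len le X = k"
proof -
  have fin: "finite {card C | C. C \<subseteq> X \<and> is_chain C}"
  proof -
    have "{card C | C. C \<subseteq> X \<and> is_chain C} \<subseteq> card ` Pow X" by blast
    then show ?thesis using X finite_subset by blast
  qed
  show ?thesis unfolding chain_len_alt
    by (rule Max_eqI[OF fin]) (use ex bd in auto)
qed

lemma chain_len_le_card:
  assumes X: "finite X"
  shows "chain_len le X \<le> card X"
proof -
  have fin: "finite {card C | C. C \<subseteq> X \<and> is_chain C}"
  proof -
    have "{card C | C. C \<subseteq> X \<and> is_chain C} \<subseteq> card ` Pow X" by blast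
    then show ?thesis using X finite_subset by blast
  qed
  have "0 \<in> {card C | C. C \<subseteq> X \<and> is_chain C}"
    by (auto simp: is_chain_def intro!: exI[of _ "{}"])
  then have ne: "{card C | C. C \<subseteq> X \<and> is_chain C} \<noteq> {}" by blast
  show ?thesis unfolding chain_len_alt
    using fin ne X by (auto simp: Max_le_iff intro: card_mono)
qed

lemma chain_len_ge2:
  assumes X: "finite X" "X \<subseteq> S" and ab: "a \<in> X" "b \<in> X" "a \<noteq> b" "le a b"
  shows "chain_len le X \<ge> 2"
proof -
  have fin: "finite {card C | C. C \<subseteq> X \<and> is_chain C}"
  proof -
    have "{card C | C. C \<subseteq> X \<and> is_chain C} \<subseteq> card ` Pow X" by blast
    then show ?thesis using X finite_subset by blast
  qed
  have "is_chain {a, b}" using ab refl X(2) unfolding is_chain_def by auto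
  then have "2 \<in> {card C | C. C \<subseteq> X \<and> is_chain C}" using ab by (intro CollectI exI[of _ "{a,b}"]) auto
  then show ?thesis unfolding chain_len_alt using fin by (simp add: Max_ge)
qed

lemma npairs_le1: "card B \<le> 1 \<Longrightarrow> finite B \<Longrightarrow> npairs le B = 0"
proof -
  assume "card B \<le> 1" "finite B"
  then have "\<forall>x\<in>B. \<forall>y\<in>B. x = y" using card_le_Suc0_iff_eq[of B] by simp
  then have "{(a, b). a \<in> B \<and> b \<in> B \<and> lt_of le a b} = {}" unfolding lt_of_def by auto
  then show ?thesis unfolding npairs_def by (metis card.empty)
qed

lemma npairs_2:
  assumes B: "card B = 2" "B \<subseteq> S"
  shows "npairs le B \<le> 1"
proof -
  obtain x y where xy: "B = {x, y}" "x \<noteq> y" using B(1) card_2_iff by metis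
  have xyS: "x \<in> S" "y \<in> S" using xy B(2) by auto
  have "{(a, b). a \<in> B \<and> b \<in> B \<and> lt_of le a b} \<subseteq> {(x, y)} \<or>
        {(a, b). a \<in> B \<and> b \<in> B \<and> lt_of le a b} \<subseteq> {(y, x)}"
    using xy antisym[OF xyS] antisym[OF xyS(2,1)] unfolding lt_of_def by auto
  moreover have "card A \<le> 1" if "A \<subseteq> {z}" for A and z :: "'a \<times> 'a"
    using subset_singletonD[OF that] by auto
  ultimately show ?thesis unfolding npairs_def by blast
qed

lemma npairs_chain2:
  assumes "lt_of le p q" "p \<in> S" "q \<in> S"
  shows "npairs le {p, q} = 1"
proof -
  have "{(a, b). a \<in> {p,q} \<and> b \<in> {p,q} \<and> lt_of le a b} = {(p, q)}"
    using assms antisym[of p q] unfolding lt_of_def by auto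
  then show ?thesis unfolding npairs_def by simp
qed

end



context fposet begin

lemma chain_len_empty: "chain_len le {} = 0"
  by (rule chain_len_eq[of "{}" "{}"]) (auto simp: is_chain_def)

end

locale bip = fposet +
  fixes E F :: "'a set"
  assumes SEF: "S = E \<union> F" and disj: "E \<inter> F = {}"
    and ltEF: "\<And>x y. x \<in> S \<Longrightarrow> y \<in> S \<Longrightarrow> lt_of le x y \<Longrightarrow> x \<in> E \<and> y \<in> F"
begin

lemma ES: "E \<subseteq> S" and FS: "F \<subseteq> S" using SEF by auto

lemma le_EE: "x \<in> E \<Longrightarrow> y \<in> E \<Longrightarrow> le x y \<Longrightarrow> x = y"
  using ltEF ES disj unfolding lt_of_def by blast
lemma le_FF: "x \<in> F \<Longrightarrow> y \<in> F \<Longrightarrow> le x y \<Longrightarrow> x = y"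
  using ltEF FS disj unfolding lt_of_def by blast
lemma le_FE: "x \<in> F \<Longrightarrow> y \<in> E \<Longrightarrow> le x y \<Longrightarrow> False"
  using ltEF ES FS disj unfolding lt_of_def by blast

lemma le_char: "x \<in> S \<Longrightarrow> y \<in> S \<Longrightarrow> le x y \<longleftrightarrow> x = y \<or> (x \<in> E \<and> y \<in> F \<and> le x y)"
  using refl ltEF unfolding lt_of_def by blast

lemma chain_card:
  assumes C: "C \<subseteq> S" "is_chain C"
  shows "card C \<le> 2"
proof -
  have fC: "finite C" using C finS finite_subset by blast
  have e: "card (C \<inter> E) \<le> 1"
  proof -
    have "\<forall>x\<in>C \<inter> E. \<forall>y\<in>C \<inter> E. x = y" using C(2) le_EE unfolding is_chain_def by blast
    then show ?thesis using card_le_Suc0_iff_eq[of "C \<inter> E"] fC by simp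
  qed
  have f: "card (C \<inter> F) \<le> 1"
  proof -
    have "\<forall>x\<in>C \<inter> F. \<forall>y\<in>C \<inter> F. x = y" using C(2) le_FF unfolding is_chain_def by blast
    then show ?thesis using card_le_Suc0_iff_eq[of "C \<inter> F"] fC by simp
  qed
  have "C = (C \<inter> E) \<union> (C \<inter> F)" using C(1) SEF by blast
  then have "card C \<le> card (C \<inter> E) + card (C \<inter> F)" by (metis card_Un_le)
  then show ?thesis using e f by simp
qed

lemma chain_len_bip:
  assumes X: "X \<subseteq> S" and ab: "a \<in> X" "b \<in> X" "lt_of le a b"
  shows "chain_len le X = 2"
proof (rule chain_len_eq[of X "{a, b}"])
  show "finite X" using X finS finite_subset by blast
  show "{a, b} \<subseteq> X" using ab by blast
  show "is_chain {a, b}" using ab X refl unfolding is_chain_def lt_of_def by auto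
  show "card {a, b} = 2" using ab unfolding lt_of_def by auto
  show "\<And>C. C \<subseteq> X \<Longrightarrow> is_chain C \<Longrightarrow> card C \<le> 2" using chain_card X by blast
qed

lemma chain_len_anti:
  assumes X: "X \<subseteq> S" "a \<in> X" and anti: "\<And>x y. x \<in> X \<Longrightarrow> y \<in> X \<Longrightarrow> le x y \<Longrightarrow> x = y"
  shows "chain_len le X = 1"
proof (rule chain_len_eq[of X "{a}"])
  show fX: "finite X" using X finS finite_subset by blast
  show "{a} \<subseteq> X" using X by blast
  show "is_chain {a}" using X refl unfolding is_chain_def by auto
  show "card {a} = 1" by simp
  fix C assume C: "C \<subseteq> X" "is_chain C"
  have "\<forall>x\<in>C. \<forall>y\<in>C. x = y" using C anti unfolding is_chain_def by blast
  then show "card C \<le> 1" using card_le_Suc0_iff_eq[of C] C fX finite_subset by fastforce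
qed

definition swf :: "'a \<Rightarrow> 'a \<Rightarrow> 'a \<Rightarrow> 'a \<Rightarrow> 'a \<Rightarrow> 'a" where
  "swf a a' b b' x = sw a a' (sw b b' x)"

lemma swf_E: "a \<in> E \<Longrightarrow> a' \<in> E \<Longrightarrow> b \<in> F \<Longrightarrow> b' \<in> F \<Longrightarrow> x \<in> E \<Longrightarrow> swf a a' b b' x = sw a a' x"
  using disj unfolding swf_def sw_def by auto
lemma swf_F: "a \<in> E \<Longrightarrow> a' \<in> E \<Longrightarrow> b \<in> F \<Longrightarrow> b' \<in> F \<Longrightarrow> x \<in> F \<Longrightarrow> swf a a' b b' x = sw b b' x"
  using disj unfolding swf_def sw_def by auto
lemma swf_out: "x \<noteq> a \<Longrightarrow> x \<noteq> a' \<Longrightarrow> x \<noteq> b \<Longrightarrow> x \<noteq> b' \<Longrightarrow> swf a a' b b' x = x"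
  unfolding swf_def sw_def by auto

lemma swap_aut:
  assumes g: "gen E F le a a' b b'"
  shows "poset_aut S le (swf a a' b b')"
proof -
  note G = gen_facts[OF g]
  let ?s = "swf a a' b b'"
  have sE: "\<And>x. x \<in> E \<Longrightarrow> ?s x = sw a a' x" using swf_E G(1-4) by blast
  have sF: "\<And>x. x \<in> F \<Longrightarrow> ?s x = sw b b' x" using swf_F G(1-4) by blast
  have sE': "\<And>x. x \<in> E \<Longrightarrow> ?s x \<in> E" using sE G(1,2) by (simp add: sw_def)
  have sF': "\<And>x. x \<in> F \<Longrightarrow> ?s x \<in> F" using sF G(3,4) by (simp add: sw_def)
  have inv: "\<And>x. x \<in> S \<Longrightarrow> ?s (?s x) = x"
  proof -
    fix x assume "x \<in> S"
    then consider "x \<in> E" | "x \<in> F" using SEF by blast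
    then show "?s (?s x) = x"
    proof cases
      case 1 then show ?thesis using sE sE' by simp
    next
      case 2 then show ?thesis using sF sF' by simp
    qed
  qed
  have sS: "\<And>x. x \<in> S \<Longrightarrow> ?s x \<in> S" using sE' sF' SEF by blast
  have bij: "bij_betw ?s S S"
    by (rule bij_betw_byWitness[of S ?s ?s S]) (use sS inv in auto)
  have ord: "le x y \<longleftrightarrow> le (?s x) (?s y)" if xy: "x \<in> S" "y \<in> S" for x y
  proof -
    have inj: "?s x = ?s y \<longleftrightarrow> x = y" using inv xy by metis
    have l1: "le x y \<longleftrightarrow> x = y \<or> (x \<in> E \<and> y \<in> F \<and> le x y)" using le_char xy by blast
    have l2: "le (?s x) (?s y) \<longleftrightarrow> ?s x = ?s y \<or> (?s x \<in> E \<and> ?s y \<in> F \<and> le (?s x) (?s y))"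
      using le_char sS xy by blast
    have e: "?s x \<in> E \<longleftrightarrow> x \<in> E" using sE' sF' xy SEF disj by blast
    have f: "?s y \<in> F \<longleftrightarrow> y \<in> F" using sE' sF' xy SEF disj by blast
    have m: "x \<in> E \<Longrightarrow> y \<in> F \<Longrightarrow> le x y \<longleftrightarrow> le (?s x) (?s y)"
      using gen_inv[OF g] sE sF by simp
    show ?thesis using l1 l2 e f m inj by blast
  qed
  have out: "\<And>x. x \<notin> S \<Longrightarrow> ?s x = x"
  proof -
    fix x assume "x \<notin> S"
    then have "x \<noteq> a" "x \<noteq> a'" "x \<noteq> b" "x \<noteq> b'" using G(1-4) SEF by auto
    then show "?s x = x" by (rule swf_out)
  qed
  show ?thesis unfolding poset_aut_def using bij ord out by blast
qed

lemma swap_vals: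
  assumes g: "gen E F le a a' b b'"
  shows "swf a a' b b' a = a'" "swf a a' b b' a' = a" "swf a a' b b' b = b'" "swf a a' b b' b' = b"
proof -
  note G = gen_facts[OF g]
  show "swf a a' b b' a = a'" using swf_E[OF G(1-4) G(1)] by (simp add: sw_def)
  show "swf a a' b b' a' = a" using swf_E[OF G(1-4) G(2)] G(5) by (simp add: sw_def)
  show "swf a a' b b' b = b'" using swf_F[OF G(1-4) G(3)] by (simp add: sw_def)
  show "swf a a' b b' b' = b" using swf_F[OF G(1-4) G(4)] G(6) by (simp add: sw_def)
qed

lemma swap_support:
  assumes g: "gen E F le a a' b b'"
  shows "support S (swf a a' b b') = {a, a', b, b'}"
proof -
  note G = gen_facts[OF g]
  note V = swap_vals[OF g]
  have d: "a \<noteq> b" "a \<noteq> b'" "a' \<noteq> b" "a' \<noteq> b'" using G(1-4) disj by auto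
  have inS: "a \<in> S" "a' \<in> S" "b \<in> S" "b' \<in> S" using G(1-4) SEF by auto
  show ?thesis
  proof
    show "support S (swf a a' b b') \<subseteq> {a, a', b, b'}"
    proof
      fix x assume "x \<in> support S (swf a a' b b')"
      then have "swf a a' b b' x \<noteq> x" unfolding support_def by blast
      then show "x \<in> {a, a', b, b'}" using swf_out[of x a a' b b'] by blast
    qed
    show "{a, a', b, b'} \<subseteq> support S (swf a a' b b')"
      unfolding support_def using V inS G(5,6) by auto
  qed
qed

lemma gen_lt: "gen E F le a a' b b' \<Longrightarrow> lt_of le a b \<and> lt_of le a' b'"
  using gen_facts[of E F le a a' b b'] disj unfolding lt_of_def by blast

lemma swap_generator:
  assumes g: "gen E F le a a' b b'"
  shows "generator_fam S le C2_carrier C2_le 2 (swf a a' b b') (\<lambda>i. if i = 0 then {a, b} else {a', b'})"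
proof -
  note G = gen_facts[OF g]
  note V = swap_vals[OF g]
  let ?s = "swf a a' b b'" and ?T = "\<lambda>i::nat. if i = 0 then {a, b} else {a', b'}"
  have aut: "poset_aut S le ?s" by (rule swap_aut[OF g])
  have sup: "support S ?s = {a, a', b, b'}" by (rule swap_support[OF g])
  have lts: "lt_of le a b" "lt_of le a' b'" using gen_lt[OF g] by auto
  have inS: "a \<in> S" "a' \<in> S" "b \<in> S" "b' \<in> S" using G(1-4) SEF by auto
  have supS: "support S ?s \<subseteq> S" using sup inS by auto
  have cl: "chain_len le (support S ?s) = 2" using chain_len_bip[OF supS] sup lts by auto
  have i2: "\<And>i::nat. i < 2 \<Longrightarrow> i = 0 \<or> i = 1" by auto
  have cT: "\<And>i. card (?T i) = 2" using lts unfolding lt_of_def by auto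
  have nT: "\<And>i. npairs le (?T i) = 1" using npairs_chain2 lts inS by auto
  have clT: "\<And>i. chain_len le (?T i) = 2"
  proof -
    fix i :: nat
    show "chain_len le (?T i) = 2"
      using chain_len_bip[of "{a,b}" a b] chain_len_bip[of "{a',b'}" a' b'] lts inS by auto
  qed
  have cyc: "cyc_family S le 2 ?s ?T"
    unfolding cyc_family_def
  proof (intro conjI allI impI)
    fix i :: nat assume i: "i < 2"
    show "?T i \<subseteq> support S ?s" using sup by auto
    have "npairs le B \<le> npairs le (?T i)" if "B \<subseteq> support S ?s" "card B = card (?T i)" for B
    proof -
      have "B \<subseteq> S" using that(1) supS by blast
      then have "npairs le B \<le> 1" using npairs_2 that(2) cT by metis
      then show ?thesis using nT by metis
    qed
    then show "max_ordered le (support S ?s) (?T i)"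
      unfolding max_ordered_def using sup by auto
    show "?s ` ?T i = ?T (Suc i mod 2)" using i2[OF i] V by auto
    show "chain_len le (?T i) = chain_len le (support S ?s)" using clT cl by simp
  next
    have "{..<2::nat} = {0, 1}" by auto
    then show "(\<Union>i<2. ?T i) = support S ?s" using sup by auto
  qed
  have iso: "poset_iso (?T i) le C2_carrier C2_le" for i
  proof -
    have ba: "\<not> le b a" using lts antisym inS unfolding lt_of_def by blast
    have ba': "\<not> le b' a'" using lts antisym inS unfolding lt_of_def by blast
    have "bij_betw (\<lambda>x. x = b) {a, b} UNIV"
      by (rule bij_betw_byWitness[where f'="\<lambda>t. if t then b else a"]) (use lts in \<open>auto simp: lt_of_def\<close>)
    moreover have "bij_betw (\<lambda>x. x = b') {a', b'} UNIV"
      by (rule bij_betw_byWitness[where f'="\<lambda>t. if t then b' else a'"]) (use lts in \<open>auto simp: lt_of_def\<close>)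
    moreover have "\<forall>x\<in>{a,b}. \<forall>y\<in>{a,b}. le x y \<longleftrightarrow> C2_le (x = b) (y = b)"
      using lts ba refl inS unfolding C2_le_def lt_of_def by auto
    moreover have "\<forall>x\<in>{a',b'}. \<forall>y\<in>{a',b'}. le x y \<longleftrightarrow> C2_le (x = b') (y = b')"
      using lts ba' refl inS unfolding C2_le_def lt_of_def by auto
    ultimately show ?thesis unfolding poset_iso_def C2_carrier_def by (cases "i = 0") auto
  qed
  have minimal: "\<not> (\<exists>U. cyc_family S le 2 ?s U \<and> card (U 0) < card C2_carrier)"
  proof
    assume "\<exists>U. cyc_family S le 2 ?s U \<and> card (U 0) < card C2_carrier"
    then obtain U where U: "cyc_family S le 2 ?s U" "card (U 0) < 2"
      unfolding C2_carrier_def by (auto simp: card_UNIV_bool)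
    have "U 0 \<subseteq> support S ?s" "chain_len le (U 0) = chain_len le (support S ?s)"
      using U(1) unfolding cyc_family_def by auto
    moreover have "finite (U 0)" using calculation(1) sup by (simp add: finite_subset)
    ultimately show False using chain_len_le_card[of "U 0"] U(2) cl by simp
  qed
  show ?thesis unfolding generator_fam_def using aut cyc iso minimal by simp
qed

lemma swap_sym1:
  assumes g: "gen E F le a a' b b'"
  shows "sym1_via S le C2_carrier C2_le 2 (swf a a' b b') a a'"
    "sym1_via S le C2_carrier C2_le 2 (swf a a' b b') b b'"
proof -
  note G = gen_facts[OF g]
  note V = swap_vals[OF g]
  have ne: "{a, b} \<noteq> {a', b'}" using G(1-6) disj by auto
  have "(swf a a' b b' ^^ 1) a = a'" "(swf a a' b b' ^^ 1) b = b'" using V by auto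
  then show "sym1_via S le C2_carrier C2_le 2 (swf a a' b b') a a'"
    "sym1_via S le C2_carrier C2_le 2 (swf a a' b b') b b'"
    unfolding sym1_via_def using swap_generator[OF g] ne
    by (intro exI[of _ "\<lambda>i::nat. if i = 0 then {a, b} else {a', b'}"] exI[of _ "0::nat"] exI[of _ "1::nat"], simp)+
qed

lemma twin_aut:
  assumes a: "a \<in> E" "a' \<in> E" "a \<noteq> a'" and tw: "\<And>y. y \<in> F \<Longrightarrow> le a y \<longleftrightarrow> le a' y"
  shows "poset_aut S le (sw a a')"
proof -
  let ?s = "sw a a'"
  have sE: "\<And>x. x \<in> E \<Longrightarrow> ?s x \<in> E" using a by (simp add: sw_def)
  have sF: "\<And>x. x \<in> F \<Longrightarrow> ?s x = x" using a disj by (auto simp: sw_def)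
  have sS: "\<And>x. x \<in> S \<Longrightarrow> ?s x \<in> S" using sE sF SEF by auto
  have bij: "bij_betw ?s S S"
    by (rule bij_betw_byWitness[of S ?s ?s S]) (use sS in auto)
  have ord: "le x y \<longleftrightarrow> le (?s x) (?s y)" if xy: "x \<in> S" "y \<in> S" for x y
  proof -
    have inj: "?s x = ?s y \<longleftrightarrow> x = y" by (simp add: sw_eq)
    have l1: "le x y \<longleftrightarrow> x = y \<or> (x \<in> E \<and> y \<in> F \<and> le x y)" using le_char xy by blast
    have l2: "le (?s x) (?s y) \<longleftrightarrow> ?s x = ?s y \<or> (?s x \<in> E \<and> ?s y \<in> F \<and> le (?s x) (?s y))"
      using le_char sS xy by blast
    have e: "?s x \<in> E \<longleftrightarrow> x \<in> E"
    proof (cases "x \<in> E")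
      case True then show ?thesis using sE by simp
    next
      case False then have "x \<in> F" using xy SEF by blast
      then show ?thesis using sF False by simp
    qed
    have f: "?s y \<in> F \<longleftrightarrow> y \<in> F"
    proof (cases "y \<in> F")
      case True then show ?thesis using sF by simp
    next
      case False then have "y \<in> E" using xy SEF by blast
      then show ?thesis using sE False disj by blast
    qed
    have m: "le x y \<longleftrightarrow> le (?s x) (?s y)" if "x \<in> E" "y \<in> F"
    proof -
      have sy: "?s y = y" using sF that(2) by blast
      consider "x = a" | "x = a'" | "x \<noteq> a \<and> x \<noteq> a'" by blast
      then show ?thesis
      proof cases
        case 1 then show ?thesis using sy tw[OF that(2)] by (simp add: sw_def)
      next
        case 2 then show ?thesis using sy tw[OF that(2)] a(3) by (simp add: sw_def)
      next
        case 3 then show ?thesis using sy by (simp add: sw_def)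
      qed
    qed
    show ?thesis using l1 l2 e f m inj by blast
  qed
  have out: "\<And>x. x \<notin> S \<Longrightarrow> ?s x = x" using a SEF by (auto simp: sw_def)
  show ?thesis unfolding poset_aut_def using bij ord out by blast
qed

lemma twin_generator:
  assumes a: "a \<in> E" "a' \<in> E" "a \<noteq> a'" and tw: "\<And>y. y \<in> F \<Longrightarrow> le a y \<longleftrightarrow> le a' y"
  shows "generator_fam S le {True} C2_le 2 (sw a a') (\<lambda>i. if i = 0 then {a} else {a'})"
proof -
  let ?s = "sw a a'" and ?T = "\<lambda>i::nat. if i = 0 then {a} else {a'}"
  have aut: "poset_aut S le ?s" by (rule twin_aut[OF a tw])
  have inS: "a \<in> S" "a' \<in> S" using a SEF by auto
  have sa: "?s a = a'" "?s a' = a" by (simp_all add: sw_def)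
  have sup: "support S ?s = {a, a'}"
  proof
    show "support S ?s \<subseteq> {a, a'}" unfolding support_def sw_def by auto
    show "{a, a'} \<subseteq> support S ?s" unfolding support_def using sa inS a(3) by auto
  qed
  have anti: "\<And>x y. x \<in> {a,a'} \<Longrightarrow> y \<in> {a,a'} \<Longrightarrow> le x y \<Longrightarrow> x = y"
  proof -
    fix x y assume "x \<in> {a,a'}" "y \<in> {a,a'}" "le x y"
    then show "x = y" using le_EE[of x y] a(1,2) by blast
  qed
  have cl: "chain_len le (support S ?s) = 1"
    using chain_len_anti[of "{a,a'}" a, OF _ _ anti] inS sup by simp
  have cl0: "chain_len le {a} = 1" using chain_len_anti[of "{a}" a] inS by simp
  have cl1: "chain_len le {a'} = 1" using chain_len_anti[of "{a'}" a'] inS by simp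
  have clT: "chain_len le (?T i) = 1" for i using cl0 cl1 by simp
  have cT: "card (?T i) = 1" for i by simp
  have cyc: "cyc_family S le 2 ?s ?T"
    unfolding cyc_family_def
  proof (intro conjI allI impI)
    fix i :: nat assume i: "i < 2"
    show "?T i \<subseteq> support S ?s" using sup by simp
    have "npairs le B \<le> npairs le (?T i)" if "B \<subseteq> support S ?s" "card B = card (?T i)" for B
    proof -
      have fs: "finite (support S ?s)" using sup by simp
      have "finite B" using that(1) fs finite_subset by auto
      moreover have "card B \<le> 1" using that(2) cT by simp
      ultimately have "npairs le B = 0" using npairs_le1 by blast
      then show ?thesis by simp
    qed
    then show "max_ordered le (support S ?s) (?T i)"
      unfolding max_ordered_def using sup by simp
    have "i = 0 \<or> i = 1" using i by linarith
    then show "?s ` ?T i = ?T (Suc i mod 2)" using sa by auto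
    show "chain_len le (?T i) = chain_len le (support S ?s)" using clT cl by simp
  next
    have "{..<2::nat} = {0, 1}" by auto
    then show "(\<Union>i<2. ?T i) = support S ?s" using sup by auto
  qed
  have iso1: "poset_iso {x} le {True} C2_le" if "x \<in> S" for x
  proof -
    have "bij_betw (\<lambda>x. True) {x} {True}" unfolding bij_betw_def by simp
    moreover have "le x x" using refl that by blast
    ultimately show ?thesis unfolding poset_iso_def C2_le_def
      by (intro exI[of _ "\<lambda>x. True"]) simp
  qed
  have iso: "poset_iso (?T i) le {True} C2_le" for i
    using iso1 inS by simp
  have minimal: "\<not> (\<exists>U. cyc_family S le 2 ?s U \<and> card (U 0) < card {True})"
  proof
    assume "\<exists>U. cyc_family S le 2 ?s U \<and> card (U 0) < card {True}"
    then obtain U where U: "cyc_family S le 2 ?s U" "card (U 0) < card {True}" by blast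
    have c0: "card (U 0) = 0" using U(2) by simp
    have z: "(0::nat) < 2" by simp
    have H: "U 0 \<subseteq> support S ?s \<and> chain_len le (U 0) = chain_len le (support S ?s)"
      using U(1) z unfolding cyc_family_def by blast
    have fs: "finite (support S ?s)" using sup by simp
    have "finite (U 0)" using H fs finite_subset by auto
    then have "U 0 = {}" using c0 by simp
    then show False using cl chain_len_empty H by simp
  qed
  have two: "(2::nat) \<le> 2" by simp
  show ?thesis unfolding generator_fam_def using two aut cyc iso minimal by blast
qed

end



context fposet begin

lemma iso_C2_pair:
  assumes "poset_iso A le C2_carrier C2_le"
  shows "\<exists>p q. A = {p, q} \<and> le p q \<and> \<not> le q p"
proof -
  obtain f :: "'a \<Rightarrow> bool" where f: "bij_betw f A UNIV" "\<And>a b. a \<in> A \<Longrightarrow> b \<in> A \<Longrightarrow> le a b \<longleftrightarrow> f a \<le> f b"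
    using assms unfolding poset_iso_def C2_carrier_def C2_le_def by blast
  obtain p where p: "p \<in> A" "f p = False" using f(1) unfolding bij_betw_def by (metis UNIV_I imageE)
  obtain q where q: "q \<in> A" "f q = True" using f(1) unfolding bij_betw_def by (metis UNIV_I imageE)
  have T0: "A = {p, q}"
  proof
    show "A \<subseteq> {p, q}"
    proof
      fix x assume x: "x \<in> A"
      have "f x = f p \<or> f x = f q" using p q by (cases "f x") auto
      then show "x \<in> {p, q}" using f(1) x p q unfolding bij_betw_def inj_on_def by blast
    qed
  qed (use p q in auto)
  have pq: "le p q" "\<not> le q p" using f(2)[OF p(1) q(1)] f(2)[OF q(1) p(1)] p q by auto
  show ?thesis using T0 pq by blast
qed

lemma iso_single:
  assumes "x \<in> S"
  shows "poset_iso {x} le {True} C2_le"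
proof -
  have "bij_betw (\<lambda>x. True) {x} {True}" unfolding bij_betw_def by simp
  moreover have "le x x" using refl assms by blast
  ultimately show ?thesis unfolding poset_iso_def C2_le_def
    by (intro exI[of _ "\<lambda>x. True"]) simp
qed

lemma iso_trans:
  assumes "poset_iso A leA B leB" "poset_iso B leB C leC"
  shows "poset_iso A leA C leC"
proof -
  obtain f where f: "bij_betw f A B" "\<forall>a\<in>A. \<forall>b\<in>A. leA a b \<longleftrightarrow> leB (f a) (f b)"
    using assms(1) unfolding poset_iso_def by blast
  obtain g where g: "bij_betw g B C" "\<forall>a\<in>B. \<forall>b\<in>B. leB a b \<longleftrightarrow> leC (g a) (g b)"
    using assms(2) unfolding poset_iso_def by blast
  have "bij_betw (g \<circ> f) A C" using f(1) g(1) by (rule bij_betw_trans)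
  moreover have "\<forall>a\<in>A. \<forall>b\<in>A. leA a b \<longleftrightarrow> leC ((g \<circ> f) a) ((g \<circ> f) b)"
    using f g bij_betw_apply[OF f(1)] by simp
  ultimately show ?thesis unfolding poset_iso_def by blast
qed

end

lemma crown2_par2: "poset_iso (crown_carrier 2) crown_le (parC2_carrier 2) parC2_le"
proof -
  let ?f = "\<lambda>p::nat \<times> bool. (if snd p then 1 - fst p else fst p, snd p)"
  let ?X = "{(0,False),(0,True),(1,False),(1,True)} :: (nat \<times> bool) set"
  have c: "crown_carrier 2 = ?X" "parC2_carrier 2 = ?X"
    unfolding crown_carrier_def parC2_carrier_def by (auto simp: less_2_cases_iff)
  have "bij_betw ?f ?X ?X" unfolding bij_betw_def inj_on_def by auto
  moreover have "\<forall>a\<in>?X. \<forall>b\<in>?X. crown_le a b \<longleftrightarrow> parC2_le (?f a) (?f b)"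
    unfolding crown_le_def parC2_le_def by auto
  ultimately show ?thesis unfolding poset_iso_def c by blast
qed

context bip begin

lemma build_iso:
  fixes n :: nat and tle :: "nat \<times> bool \<Rightarrow> nat \<times> bool \<Rightarrow> bool"
  assumes pi: "bij_betw \<pi> E F" and g: "bij_betw g E {..<n}"
    and K: "\<And>x x'. x \<in> E \<Longrightarrow> x' \<in> E \<Longrightarrow> le x (\<pi> x') \<longleftrightarrow> K (g x) (g x')"
    and tle: "\<And>p q. p \<in> {..<n} \<times> UNIV \<Longrightarrow> q \<in> {..<n} \<times> UNIV \<Longrightarrow>
               tle p q \<longleftrightarrow> p = q \<or> (\<not> snd p \<and> snd q \<and> K (fst p) (fst q))"
  shows "poset_iso S le ({..<n} \<times> UNIV) tle"
proof -
  let ?pi' = "inv_into E \<pi>"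
  let ?phi = "\<lambda>x. if x \<in> E then (g x, False) else (g (?pi' x), True)"
  have piE: "\<pi> ` E = F" using pi unfolding bij_betw_def by blast
  have pi'F: "\<And>y. y \<in> F \<Longrightarrow> ?pi' y \<in> E" using piE by (metis inv_into_into)
  have pipi': "\<And>y. y \<in> F \<Longrightarrow> \<pi> (?pi' y) = y" using pi by (meson bij_betw_inv_into_right)
  have pi'pi: "\<And>x. x \<in> E \<Longrightarrow> ?pi' (\<pi> x) = x" using pi by (meson bij_betw_inv_into_left)
  have piF: "\<And>x. x \<in> E \<Longrightarrow> \<pi> x \<in> F" using pi by (meson bij_betwE)
  let ?g' = "inv_into E g"
  have gn: "\<And>x. x \<in> E \<Longrightarrow> g x \<in> {..<n}" using g by (meson bij_betwE)
  have gE: "g ` E = {..<n}" using g unfolding bij_betw_def by blast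
  have g'E: "\<And>i. i \<in> {..<n} \<Longrightarrow> ?g' i \<in> E" using gE by (metis inv_into_into)
  have gg': "\<And>i. i \<in> {..<n} \<Longrightarrow> g (?g' i) = i" using g by (meson bij_betw_inv_into_right)
  have g'g: "\<And>x. x \<in> E \<Longrightarrow> ?g' (g x) = x" using g by (meson bij_betw_inv_into_left)
  let ?psi = "\<lambda>p. if snd p then \<pi> (?g' (fst p)) else ?g' (fst p)"
  have bij: "bij_betw ?phi S ({..<n} \<times> UNIV)"
  proof (rule bij_betw_byWitness[where f'="?psi"])
    show "\<forall>a\<in>S. ?psi (?phi a) = a"
    proof
      fix a assume "a \<in> S"
      then consider "a \<in> E" | "a \<in> F" "a \<notin> E" using SEF by blast
      then show "?psi (?phi a) = a"
      proof cases
        case 1 then show ?thesis using g'g by simp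
      next
        case 2 then show ?thesis using g'g pi'F pipi' by simp
      qed
    qed
    show "\<forall>a'\<in>{..<n} \<times> UNIV. ?phi (?psi a') = a'"
    proof
      fix p :: "nat \<times> bool" assume p: "p \<in> {..<n} \<times> UNIV"
      then have i: "fst p \<in> {..<n}" by auto
      show "?phi (?psi p) = p"
      proof (cases "snd p")
        case True
        have "\<pi> (?g' (fst p)) \<in> F" using piF g'E i by blast
        then have "\<pi> (?g' (fst p)) \<notin> E" using disj by blast
        then show ?thesis using True pi'pi g'E i gg' by (cases p) simp
      next
        case False
        then show ?thesis using g'E i gg' by (cases p) simp
      qed
    qed
    show "?phi ` S \<subseteq> {..<n} \<times> UNIV" using gn pi'F SEF by auto
    show "?psi ` ({..<n} \<times> UNIV) \<subseteq> S" using g'E piF SEF by auto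
  qed
  have ord: "le x y \<longleftrightarrow> tle (?phi x) (?phi y)" if xy: "x \<in> S" "y \<in> S" for x y
  proof -
    have inS: "?phi x \<in> {..<n} \<times> UNIV" "?phi y \<in> {..<n} \<times> UNIV" using bij_betwE[OF bij] xy by blast+
    have injphi: "?phi x = ?phi y \<longleftrightarrow> x = y" using bij xy unfolding bij_betw_def inj_on_def by blast
    have t: "tle (?phi x) (?phi y) \<longleftrightarrow> x = y \<or> (x \<in> E \<and> y \<notin> E \<and> K (fst (?phi x)) (fst (?phi y)))"
      using tle[OF inS] injphi by auto
    have yE: "y \<notin> E \<longleftrightarrow> y \<in> F" using xy SEF disj by blast
    have m: "le x y \<longleftrightarrow> K (g x) (g (?pi' y))" if "x \<in> E" "y \<in> F"
      using K[OF that(1) pi'F[OF that(2)]] pipi'[OF that(2)] by simp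
    show ?thesis using le_char[OF xy] t yE m by auto
  qed
  show ?thesis unfolding poset_iso_def using bij ord by blast
qed

lemma perm_iso:
  assumes rows: "\<forall>x\<in>E. \<exists>!y. y \<in> F \<and> le x y" and cols: "\<forall>y\<in>F. \<exists>!x. x \<in> E \<and> le x y"
  shows "poset_iso S le (parC2_carrier (card E)) parC2_le"
proof -
  define \<pi> where "\<pi> x = (THE y. y \<in> F \<and> le x y)" for x
  have pi: "\<pi> x \<in> F \<and> le x (\<pi> x)" if "x \<in> E" for x
    unfolding \<pi>_def using theI'[OF rows[rule_format, OF that]] .
  have piu: "y = \<pi> x" if "x \<in> E" "y \<in> F" "le x y" for x y
    using rows that pi by blast
  have bpi: "bij_betw \<pi> E F"
  proof (rule bij_betw_imageI)
    show "inj_on \<pi> E" unfolding inj_on_def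
    proof (intro ballI impI)
      fix x x' assume xx: "x \<in> E" "x' \<in> E" "\<pi> x = \<pi> x'"
      have "\<pi> x \<in> F" using pi xx(1) by blast
      then have "\<exists>!z. z \<in> E \<and> le z (\<pi> x)" using cols by blast
      moreover have "le x (\<pi> x)" using pi xx(1) by blast
      moreover have "le x' (\<pi> x)" using pi[OF xx(2)] xx(3) by simp
      ultimately show "x = x'" using xx by blast
    qed
    show "\<pi> ` E = F"
    proof
      show "\<pi> ` E \<subseteq> F" using pi by blast
      show "F \<subseteq> \<pi> ` E"
      proof
        fix y assume y: "y \<in> F"
        then obtain x where "x \<in> E" "le x y" using cols by blast
        then show "y \<in> \<pi> ` E" using piu y by blast
      qed
    qed
  qed
  have fE: "finite E" using ES finS finite_subset by blast
  obtain h where h: "bij_betw h {0..<card E} E" using ex_bij_betw_nat_finite[OF fE] by blast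
  have g: "bij_betw (inv_into {0..<card E} h) E {..<card E}"
    using bij_betw_inv_into[OF h] by (simp add: atLeast0LessThan)
  let ?g = "inv_into {0..<card E} h"
  have ginj: "?g x = ?g x' \<longleftrightarrow> x = x'" if "x \<in> E" "x' \<in> E" for x x'
    using g that unfolding bij_betw_def inj_on_def by blast
  have K: "le x (\<pi> x') \<longleftrightarrow> ?g x = ?g x'" if xx: "x \<in> E" "x' \<in> E" for x x'
  proof
    assume "le x (\<pi> x')"
    then have "\<pi> x' = \<pi> x" using piu[OF xx(1)] pi[OF xx(2)] by blast
    then have "x' = x" using bpi xx unfolding bij_betw_def inj_on_def by blast
    then show "?g x = ?g x'" by simp
  next
    assume "?g x = ?g x'"
    then have "x = x'" using ginj xx by blast
    then show "le x (\<pi> x')" using pi xx by blast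
  qed
  show ?thesis unfolding parC2_carrier_def
    by (rule build_iso[OF bpi g K]) (auto simp: parC2_le_def)
qed

lemma crown_iso:
  assumes rows: "\<forall>x\<in>E. \<exists>!y. y \<in> F \<and> \<not> le x y" and cols: "\<forall>y\<in>F. \<exists>!x. x \<in> E \<and> \<not> le x y"
  shows "poset_iso S le (crown_carrier (card E)) crown_le"
proof -
  define \<pi> where "\<pi> x = (THE y. y \<in> F \<and> \<not> le x y)" for x
  have pi: "\<pi> x \<in> F \<and> \<not> le x (\<pi> x)" if "x \<in> E" for x
    unfolding \<pi>_def using theI'[OF rows[rule_format, OF that]] .
  have piu: "y = \<pi> x" if "x \<in> E" "y \<in> F" "\<not> le x y" for x y
    using rows that pi by blast
  have bpi: "bij_betw \<pi> E F"
  proof (rule bij_betw_imageI)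
    show "inj_on \<pi> E" unfolding inj_on_def
    proof (intro ballI impI)
      fix x x' assume xx: "x \<in> E" "x' \<in> E" "\<pi> x = \<pi> x'"
      have "\<pi> x \<in> F" using pi xx(1) by blast
      then have "\<exists>!z. z \<in> E \<and> \<not> le z (\<pi> x)" using cols by blast
      moreover have "\<not> le x (\<pi> x)" using pi xx(1) by blast
      moreover have "\<not> le x' (\<pi> x)" using pi[OF xx(2)] xx(3) by simp
      ultimately show "x = x'" using xx by blast
    qed
    show "\<pi> ` E = F"
    proof
      show "\<pi> ` E \<subseteq> F" using pi by blast
      show "F \<subseteq> \<pi> ` E"
      proof
        fix y assume y: "y \<in> F"
        then obtain x where "x \<in> E" "\<not> le x y" using cols by blast
        then show "y \<in> \<pi> ` E" using piu y by blast
      qed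
    qed
  qed
  have fE: "finite E" using ES finS finite_subset by blast
  obtain h where h: "bij_betw h {0..<card E} E" using ex_bij_betw_nat_finite[OF fE] by blast
  have g: "bij_betw (inv_into {0..<card E} h) E {..<card E}"
    using bij_betw_inv_into[OF h] by (simp add: atLeast0LessThan)
  let ?g = "inv_into {0..<card E} h"
  have ginj: "?g x = ?g x' \<longleftrightarrow> x = x'" if "x \<in> E" "x' \<in> E" for x x'
    using g that unfolding bij_betw_def inj_on_def by blast
  have K: "le x (\<pi> x') \<longleftrightarrow> ?g x \<noteq> ?g x'" if xx: "x \<in> E" "x' \<in> E" for x x'
  proof
    assume "le x (\<pi> x')"
    then have "x \<noteq> x'" using pi xx by blast
    then show "?g x \<noteq> ?g x'" using ginj xx by blast
  next
    assume "?g x \<noteq> ?g x'"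
    then have ne: "x \<noteq> x'" by blast
    show "le x (\<pi> x')"
    proof (rule ccontr)
      assume "\<not> le x (\<pi> x')"
      then have "\<pi> x' = \<pi> x" using piu[OF xx(1)] pi[OF xx(2)] by blast
      then have "x' = x" using bpi xx unfolding bij_betw_def inj_on_def by blast
      then show False using ne by simp
    qed
  qed
  show ?thesis unfolding crown_carrier_def
    by (rule build_iso[OF bpi g K]) (auto simp: crown_le_def)
qed

end



context bip begin

definition twinfree :: bool where
  "twinfree \<longleftrightarrow> (\<forall>a\<in>E. \<forall>a'\<in>E. a \<noteq> a' \<longrightarrow> \<not> (\<forall>y\<in>F. le a y \<longleftrightarrow> le a' y))"

lemma gen_C2_bip:
  assumes tf: twinfree and g: "generator_fam S le C2_carrier C2_le 2 \<sigma> T"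
  shows "\<exists>p p' q q'. gen E F le p p' q q' \<and> support S \<sigma> = {p, p', q, q'} \<and>
            \<sigma> p = p' \<and> \<sigma> p' = p \<and> \<sigma> q = q' \<and> \<sigma> q' = q"
proof -
  obtain p q where pq: "T 0 = {p, q}" "lt_of le p q" "T (Suc 0) = {\<sigma> p, \<sigma> q}" "\<sigma> (\<sigma> p) = p" "\<sigma> (\<sigma> q) = q"
     "support S \<sigma> = T 0 \<union> T (Suc 0)" "poset_aut S le \<sigma>" "p \<in> S" "q \<in> S" "\<sigma> p \<noteq> p" "\<sigma> q \<noteq> q"
    using gen_C2[OF g] by blast
  note aut = pq(7)
  define p' where "p' = \<sigma> p"
  define q' where "q' = \<sigma> q"
  have pE: "p \<in> E" "q \<in> F" using ltEF[OF pq(8,9,2)] by auto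
  have lt': "lt_of le p' q'" using aut_lt[OF aut pq(8,9)] pq(2) unfolding p'_def q'_def by simp
  have S': "p' \<in> S" "q' \<in> S" using aut_S[OF aut] pq(8,9) unfolding p'_def q'_def by auto
  have pE': "p' \<in> E" "q' \<in> F" using ltEF[OF S' lt'] by auto
  have sup: "support S \<sigma> = {p, p', q, q'}" using pq(1,3,6) unfolding p'_def q'_def by auto
  have fx: "\<sigma> x = x" if "x \<in> S" "x \<notin> {p, p', q, q'}" for x
    using that sup unfolding support_def by blast
  have vals: "\<sigma> p = p'" "\<sigma> p' = p" "\<sigma> q = q'" "\<sigma> q' = q" using pq(4,5) unfolding p'_def q'_def by auto
  have ne: "p \<noteq> p'" "q \<noteq> q'" using pq(10,11) unfolding p'_def q'_def by auto
  have lepq: "le p q" "le p' q'" using pq(2) lt' unfolding lt_of_def by auto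
  have agreeF: "le p y \<longleftrightarrow> le p' y" if "y \<in> F" "y \<noteq> q" "y \<noteq> q'" for y
  proof -
    have yS: "y \<in> S" using that FS by blast
    have "y \<notin> {p, p', q, q'}" using that pE pE' disj by auto
    then have "\<sigma> y = y" using fx yS by blast
    then show ?thesis using aut_le[OF aut pq(8) yS] vals by simp
  qed
  have agreeE: "le x q \<longleftrightarrow> le x q'" if "x \<in> E" "x \<noteq> p" "x \<noteq> p'" for x
  proof -
    have xS: "x \<in> S" using that ES by blast
    have "x \<notin> {p, p', q, q'}" using that pE pE' disj by auto
    then have "\<sigma> x = x" using fx xS by blast
    then show ?thesis using aut_le[OF aut xS pq(9)] vals by simp
  qed
  have n1: "\<not> le p q'"
  proof
    assume h: "le p q'"
    have "le p' q" using aut_le[OF aut pq(8) S'(2)] h vals by simp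
    then have "\<forall>y\<in>F. le p y \<longleftrightarrow> le p' y" using agreeF lepq h by blast
    then show False using tf pE pE' ne unfolding twinfree_def by blast
  qed
  have n2: "\<not> le p' q"
  proof
    assume h: "le p' q"
    have "le p q'" using aut_le[OF aut S'(1) pq(9)] h vals by simp
    then show False using n1 by simp
  qed
  have "gen E F le p p' q q'"
    unfolding gen_def using pE pE' ne lepq n1 n2 agreeE agreeF by blast
  then show ?thesis using sup vals by blast
qed

lemma step_gen:
  assumes tf: twinfree and g: "generator_fam S le C2_carrier C2_le 2 \<sigma> T"
    and y: "y \<in> support S \<sigma>"
  shows "(y \<in> E \<and> \<sigma> y \<in> E \<and> (\<exists>b b'. gen E F le y (\<sigma> y) b b')) \<or>
         (y \<in> F \<and> \<sigma> y \<in> F \<and> (\<exists>a a'. gen E F le a a' y (\<sigma> y)))"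
proof -
  obtain p p' q q' where G: "gen E F le p p' q q'" "support S \<sigma> = {p, p', q, q'}"
     "\<sigma> p = p'" "\<sigma> p' = p" "\<sigma> q = q'" "\<sigma> q' = q"
    using gen_C2_bip[OF tf g] by blast
  note GF = gen_facts[OF G(1)]
  have "y = p \<or> y = p' \<or> y = q \<or> y = q'" using y G(2) by auto
  then show ?thesis
  proof (elim disjE)
    assume "y = p" then show ?thesis using G(1,3) GF(1,2) by blast
  next
    assume "y = p'" then show ?thesis using gen_sym[OF G(1)] G(4) GF(1,2) by blast
  next
    assume "y = q" then show ?thesis using G(1,5) GF(3,4) by blast
  next
    assume "y = q'" then show ?thesis using gen_sym[OF G(1)] G(6) GF(3,4) by blast
  qed
qed

end



context fposet begin

abbreviation RR where "RR \<equiv> prime_sym_rel S le C2_carrier C2_le 2"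
abbreviation sp where "sp \<equiv> sym1_prime S le C2_carrier C2_le 2"

lemma sp_S: "sp x y \<Longrightarrow> x \<in> S \<and> y \<in> S"
  using sym1_prime_aut aut_S by metis

lemma rtc_sym: "sp\<^sup>*\<^sup>* x y \<Longrightarrow> sp\<^sup>*\<^sup>* y x"
proof (induction rule: rtranclp_induct)
  case base then show ?case by simp
next
  case (step y z)
  have "sp z y" using sym1_prime_sym[OF step(2)] .
  then show ?case using step(3) by (rule converse_rtranclp_into_rtranclp)
qed

lemma RR_iff: "(x, y) \<in> RR \<longleftrightarrow> x \<in> S \<and> y \<in> S \<and> sp\<^sup>*\<^sup>* x y"
  unfolding prime_sym_rel_def by simp

lemma equiv_RR: "equiv S RR"
proof (rule equivI)
  show "RR \<subseteq> S \<times> S" using RR_iff by auto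
  show "refl_on S RR" unfolding refl_on_def using RR_iff by auto
  show "sym RR" unfolding sym_def using RR_iff rtc_sym by blast
  show "trans RR" unfolding trans_def using RR_iff by (meson rtranclp_trans)
qed

lemma rtc_dn: "sp\<^sup>*\<^sup>* x y \<Longrightarrow> x \<in> S \<Longrightarrow> dn y = dn x \<and> y \<in> S"
proof (induction rule: rtranclp_induct)
  case base then show ?case by simp
next
  case (step y z)
  obtain \<sigma> where s: "poset_aut S le \<sigma>" "z = \<sigma> y" "y \<in> S" using sym1_prime_aut[OF step(2)] by blast
  then show ?case using step aut_dn[OF s(1) s(3)] aut_S[OF s(1) s(3)] by simp
qed

lemma sp_sym1: "sp x y \<Longrightarrow> sym1 S le C2_carrier C2_le 2 x y"
  unfolding sym1_prime_def sym1_def by blast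

lemma RR_qr: "(x, y) \<in> RR \<Longrightarrow> qr_sym S le C2_carrier C2_le 2 x y"
proof -
  assume "(x, y) \<in> RR"
  then have "sp\<^sup>*\<^sup>* x y" using RR_iff by blast
  then show ?thesis unfolding qr_sym_def
    by (rule rtranclp_mono[THEN predicate2D, rotated]) (auto intro: sp_sym1)
qed

lemma sp_gen: "sp x y \<Longrightarrow> \<exists>\<sigma> T. generator_fam S le C2_carrier C2_le 2 \<sigma> T \<and> x \<in> support S \<sigma> \<and> y = \<sigma> x"
proof -
  assume "sp x y"
  then obtain A X \<sigma> where "\<sigma> \<in> sym_gens S le C2_carrier C2_le 2 A" "sym1_via S le C2_carrier C2_le 2 \<sigma> x y"
    unfolding sym1_prime_def by blast
  then show ?thesis using sym1_via_C2 unfolding sym_gens_def generator_def by blast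
qed

lemma forward:
  assumes iso: "poset_iso (retract'_carrier S le C2_carrier C2_le 2) (quot_le le) C2_carrier C2_le"
    and notC2: "\<not> poset_iso S le C2_carrier C2_le"
  shows "(\<exists>n\<ge>2. poset_iso S le (parC2_carrier n) parC2_le) \<or> (\<exists>n\<ge>3. poset_iso S le (crown_carrier n) crown_le)"
proof -
  have eqv: "equiv S RR" by (rule equiv_RR)
  obtain f :: "'a set \<Rightarrow> bool" where f: "bij_betw f (S//RR) UNIV"
      "\<And>X Y. X \<in> S//RR \<Longrightarrow> Y \<in> S//RR \<Longrightarrow> quot_le le X Y \<longleftrightarrow> f X \<le> f Y"
    using iso unfolding poset_iso_def retract'_carrier_def C2_carrier_def C2_le_def by blast
  obtain E where E: "E \<in> S//RR" "f E = False" using f(1) unfolding bij_betw_def by (metis UNIV_I imageE)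
  obtain F where F: "F \<in> S//RR" "f F = True" using f(1) unfolding bij_betw_def by (metis UNIV_I imageE)
  have EF: "E \<noteq> F" using E F by auto
  have qEF: "quot_le le E F" using f(2)[OF E(1) F(1)] E F by simp
  have nqFE: "\<not> quot_le le F E" using f(2)[OF F(1) E(1)] E F by simp
  have all: "S//RR = {E, F}"
  proof
    show "S//RR \<subseteq> {E, F}"
    proof
      fix X assume X: "X \<in> S//RR"
      have "f X = f E \<or> f X = f F" using E F by (cases "f X") auto
      then show "X \<in> {E, F}" using f(1) X E F unfolding bij_betw_def inj_on_def by blast
    qed
  qed (use E F in auto)
  have SEF: "S = E \<union> F" using Union_quotient[OF eqv] all by auto
  have disj: "E \<inter> F = {}" using quotient_disj[OF eqv E(1) F(1)] EF by auto
  have sameR: "\<And>X x y. X \<in> S//RR \<Longrightarrow> x \<in> X \<Longrightarrow> y \<in> X \<Longrightarrow> (x, y) \<in> RR"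
    using in_quotient_imp_in_rel[OF eqv] by blast
  have closed: "y \<in> X" if X: "X \<in> S//RR" "x \<in> X" "(x, y) \<in> RR" for X x y
  proof -
    obtain z where z: "X = RR``{z}" "z \<in> S" using X(1) by (rule quotientE)
    have "(z, x) \<in> RR" using z X(2) by blast
    then have "(z, y) \<in> RR" using X(3) eqv unfolding equiv_def trans_def by blast
    then show ?thesis using z by blast
  qed
  have dnR: "dn x = dn y" if "(x, y) \<in> RR" for x y
  proof -
    have "sp\<^sup>*\<^sup>* x y" "x \<in> S" using that RR_iff by auto
    then show ?thesis using rtc_dn by simp
  qed
  have ltEF: "x \<in> E \<and> y \<in> F" if xy: "x \<in> S" "y \<in> S" "lt_of le x y" for x y
  proof -
    have d: "dn x < dn y" using lt_dn[OF xy] .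
    have nE: "\<not> (x \<in> E \<and> y \<in> E)"
    proof
      assume "x \<in> E \<and> y \<in> E"
      then have "(x, y) \<in> RR" using sameR[OF E(1)] by blast
      then show False using dnR d by simp
    qed
    have nF: "\<not> (x \<in> F \<and> y \<in> F)"
    proof
      assume "x \<in> F \<and> y \<in> F"
      then have "(x, y) \<in> RR" using sameR[OF F(1)] by blast
      then show False using dnR d by simp
    qed
    have nFE: "\<not> (x \<in> F \<and> y \<in> E)" using nqFE xy(3) unfolding quot_le_def lt_of_def by blast
    show ?thesis using nE nF nFE xy(1,2) SEF by blast
  qed
  interpret B: bip S le E F
  proof unfold_locales
    show "S = E \<union> F" by (rule SEF)
    show "E \<inter> F = {}" by (rule disj)
    show "\<And>x y. x \<in> S \<Longrightarrow> y \<in> S \<Longrightarrow> lt_of le x y \<Longrightarrow> x \<in> E \<and> y \<in> F" by (rule ltEF)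
  qed
  show ?thesis
  proof (cases "\<exists>x y. sp x y")
    case False
    have triv: "x = y" if "(x, y) \<in> RR" for x y
    proof -
      have "sp\<^sup>*\<^sup>* x y" using that RR_iff by blast
      then show ?thesis using False by (cases rule: converse_rtranclpE) auto
    qed
    have single: "\<exists>e. X = {e}" if X: "X \<in> S//RR" for X
    proof -
      obtain z where z: "X = RR``{z}" "z \<in> S" using X by (rule quotientE)
      have "RR``{z} = {z}" using triv z(2) RR_iff by auto
      then show ?thesis using z by blast
    qed
    obtain e where e: "E = {e}" using single E(1) by blast
    obtain e' where e': "F = {e'}" using single F(1) by blast
    have S2: "S = {e, e'}" using SEF e e' by auto
    have ee: "le e e'" "\<not> le e' e" "e \<noteq> e'" using qEF nqFE disj e e' unfolding quot_le_def by auto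
    have "poset_iso S le C2_carrier C2_le"
    proof -
      have "bij_betw (\<lambda>x. x = e') S UNIV"
        by (rule bij_betw_byWitness[where f'="\<lambda>t. if t then e' else e"]) (use S2 ee in auto)
      moreover have "\<forall>x\<in>S. \<forall>y\<in>S. le x y \<longleftrightarrow> C2_le (x = e') (y = e')"
        using S2 ee refl unfolding C2_le_def by auto
      ultimately show ?thesis unfolding poset_iso_def C2_carrier_def by blast
    qed
    then show ?thesis using notC2 by blast
  next
    case True
    then obtain x0 y0 where sp0: "sp x0 y0" by blast
    then obtain A X \<sigma>0 where P: "prime_sym_set S le C2_carrier C2_le 2 A X"
        "\<sigma>0 \<in> sym_gens S le C2_carrier C2_le 2 A"
      unfolding sym1_prime_def by blast
    obtain T0 where T0: "generator_fam S le C2_carrier C2_le 2 \<sigma>0 T0"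
      using P(2) unfolding sym_gens_def generator_def by blast
    obtain p q where pq: "lt_of le p q" "poset_aut S le \<sigma>0" "p \<in> S" "q \<in> S" "\<sigma>0 p \<noteq> p" "\<sigma>0 q \<noteq> q"
      using gen_C2[OF T0] by blast
    have pE: "p \<in> E" "\<sigma>0 p \<in> E"
      using ltEF[OF pq(3,4,1)] ltEF[OF aut_S[OF pq(2) pq(3)] aut_S[OF pq(2) pq(4)]] aut_lt[OF pq(2,3,4)] pq(1)
      by auto
    have PA: "linked S le A" "poset_iso A le C2_carrier C2_le" "X = sym_set_of S le C2_carrier C2_le 2 A"
      "\<not> composite_sym S le C2_carrier C2_le 2 X"
      using P(1) unfolding prime_sym_set_def by auto
    obtain a1 a2 where A: "A = {a1, a2}" "le a1 a2" "\<not> le a2 a1" using iso_C2_pair[OF PA(2)] by blast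
    have AS: "A \<subseteq> S" using PA(1) unfolding linked_def by blast
    have a12: "a1 \<in> E" "a2 \<in> F"
      using ltEF[of a1 a2] A AS unfolding lt_of_def by auto
    have allgens: "\<sigma> \<in> sym_gens S le C2_carrier C2_le 2 A" if "generator S le C2_carrier C2_le 2 \<sigma>" for \<sigma>
    proof -
      have "\<exists>a\<in>A. qr_sym S le C2_carrier C2_le 2 a b" if "b \<in> S" for b
      proof (cases "b \<in> E")
        case True then show ?thesis using sameR[OF E(1) a12(1)] RR_qr A by blast
      next
        case False then have "b \<in> F" using that SEF by blast
        then show ?thesis using sameR[OF F(1) a12(2)] RR_qr A by blast
      qed
      then show ?thesis unfolding sym_gens_def using that by blast
    qed
    have XS: "X = S"
    proof
      show "X \<subseteq> S" using PA(3) unfolding sym_set_of_def by blast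
      show "S \<subseteq> X"
      proof
        fix x assume x: "x \<in> S"
        obtain x' where x': "(x, x') \<in> RR" "x' \<noteq> x"
        proof (cases "x \<in> E")
          case True
          then show ?thesis using that sameR[OF E(1) True] pE pq(5) by (metis)
        next
          case False
          then have xF: "x \<in> F" using x SEF by blast
          have qF: "q \<in> F" "\<sigma>0 q \<in> F" "\<sigma>0 q \<noteq> q" using ltEF[OF pq(3,4,1)]
            ltEF[OF aut_S[OF pq(2) pq(3)] aut_S[OF pq(2) pq(4)]] aut_lt[OF pq(2,3,4)] pq(1,6)
            by auto
          then show ?thesis using that sameR[OF F(1) xF] by metis
        qed
        have "sp\<^sup>*\<^sup>* x x'" using x' RR_iff by blast
        then obtain z where z: "sp x z" using x'(2) by (cases rule: converse_rtranclpE) auto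
        obtain \<sigma> T where s: "generator_fam S le C2_carrier C2_le 2 \<sigma> T" "x \<in> support S \<sigma>"
          using sp_gen[OF z] by blast
        have "\<sigma> \<in> sym_gens S le C2_carrier C2_le 2 A" using allgens s(1) unfolding generator_def by blast
        moreover have "\<sigma> x \<noteq> x" using s(2) unfolding support_def by blast
        ultimately show "x \<in> X" using PA(3) x unfolding sym_set_of_def by blast
      qed
    qed
    have tf: B.twinfree
      unfolding B.twinfree_def
    proof (intro ballI impI notI)
      fix a a' assume a: "a \<in> E" "a' \<in> E" "a \<noteq> a'" and tw: "\<forall>y\<in>F. le a y \<longleftrightarrow> le a' y"
      have G': "generator_fam S le {True} C2_le 2 (sw a a') (\<lambda>i. if i = 0 then {a} else {a'})"
        using B.twin_generator[OF a] tw by blast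
      have aS: "a \<in> S" "a' \<in> S" using a SEF by auto
      let ?X' = "sym_set_of S le {True} C2_le 2 {a}"
      have sv: "sym1_via S le {True} C2_le 2 (sw a a') a a'"
        unfolding sym1_via_def
        by (rule exI[of _ "\<lambda>i::nat. if i = 0 then {a} else {a'}"], rule exI[of _ 0], rule exI[of _ 1],
            rule exI[of _ 1]) (use G' a(3) in \<open>simp add: sw_def\<close>)
      have qa: "qr_sym S le {True} C2_le 2 a a'"
        unfolding qr_sym_def sym1_def using sv by blast
      have qa0: "qr_sym S le {True} C2_le 2 a a" unfolding qr_sym_def by simp
      have "sw a a' \<in> sym_gens S le {True} C2_le 2 {a}"
        unfolding sym_gens_def generator_def
      proof (intro CollectI conjI ballI impI)
        show "\<exists>T. generator_fam S le {True} C2_le 2 (sw a a') T" using G' by blast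
      next
        fix b assume b: "b \<in> S" "\<not> (\<exists>a0\<in>{a}. qr_sym S le {True} C2_le 2 a0 b)"
        then have "b \<noteq> a" "b \<noteq> a'" using qa qa0 by auto
        then show "sw a a' b = b" by (simp add: sw_def)
      qed
      moreover have "sw a a' a \<noteq> a" using a(3) by (simp add: sw_def)
      ultimately have aX': "a \<in> ?X'" unfolding sym_set_of_def using aS by blast
      have lk: "linked S le {a}" unfolding linked_def lt_of_def using aS by auto
      have iss: "is_sym_set S le {True} C2_le 2 ?X'"
        unfolding is_sym_set_def using lk iso_single[OF aS(1)] by blast
      have "composite_sym S le C2_carrier C2_le 2 X"
        unfolding composite_sym_def
      proof (intro exI conjI)
        show "{True} \<subseteq> C2_carrier" unfolding C2_carrier_def by simp
        show "(2::nat) \<le> 2" by simp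
        show "is_sym_set S le {True} C2_le 2 ?X'" by (rule iss)
        show "?X' \<subseteq> X" using XS unfolding sym_set_of_def by blast
        show "?X' \<noteq> {}" using aX' by blast
        show "{True} \<subset> C2_carrier \<or> ({True} = C2_carrier \<and> (2::nat) < 2)"
          unfolding C2_carrier_def by auto
      qed
      then show False using PA(4) by blast
    qed
    have spstep: "(y \<in> E \<and> z \<in> E \<and> (\<exists>b b'. gen E F le y z b b')) \<or>
                  (y \<in> F \<and> z \<in> F \<and> (\<exists>a a'. gen E F le a a' y z))" if spyz: "sp y z" for y z
    proof -
      obtain \<sigma> T where s: "generator_fam S le C2_carrier C2_le 2 \<sigma> T" "y \<in> support S \<sigma>" "z = \<sigma> y"
        using sp_gen[OF spyz] by blast
      show ?thesis using B.step_gen[OF tf s(1,2)] s(3) by blast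
    qed
    have HE: "\<exists>b b'. gen E F le a1 a2 b b'" if a: "a1 \<in> E" "a2 \<in> E" "a1 \<noteq> a2" for a1 a2
    proof -
      have r: "sp\<^sup>*\<^sup>* a1 a2" using sameR[OF E(1) a(1,2)] RR_iff by blast
      have "y \<in> E \<and> (y = a1 \<or> (\<exists>b b'. gen E F le a1 y b b'))" if "sp\<^sup>*\<^sup>* a1 y" for y
        using that
      proof (induction rule: rtranclp_induct)
        case base then show ?case using a(1) by simp
      next
        case (step y z)
        have yE: "y \<in> E" using step(3) by blast
        have st: "z \<in> E" "\<exists>b b'. gen E F le y z b b'" using spstep[OF step(2)] yE disj by blast+
        show ?case
        proof (cases "y = a1")
          case True then show ?thesis using st by blast
        next
          case False
          then obtain b b' where g1: "gen E F le a1 y b b'" using step(3) by blast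
          obtain c c' where g2: "gen E F le y z c c'" using st(2) by blast
          show ?thesis using gen_trans[OF g1 g2] st(1) by blast
        qed
      qed
      then show ?thesis using r a(3) by blast
    qed
    have HF: "\<exists>u u'. gen E F le u u' b1 b2" if b: "b1 \<in> F" "b2 \<in> F" "b1 \<noteq> b2" for b1 b2
    proof -
      have r: "sp\<^sup>*\<^sup>* b1 b2" using sameR[OF F(1) b(1,2)] RR_iff by blast
      have "y \<in> F \<and> (y = b1 \<or> (\<exists>u u'. gen E F le u u' b1 y))" if "sp\<^sup>*\<^sup>* b1 y" for y
        using that
      proof (induction rule: rtranclp_induct)
        case base then show ?case using b(1) by simp
      next
        case (step y z)
        have yF: "y \<in> F" using step(3) by blast
        have st: "z \<in> F" "\<exists>u u'. gen E F le u u' y z" using spstep[OF step(2)] yF disj by blast+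
        show ?case
        proof (cases "y = b1")
          case True then show ?thesis using st by blast
        next
          case False
          then obtain u u' where g1: "gen E F le u u' b1 y" using step(3) by blast
          obtain c c' where g2: "gen E F le c c' y z" using st(2) by blast
          show ?thesis using gen_trans_F[OF g1 g2] st(1) by blast
        qed
      qed
      then show ?thesis using r b(3) by blast
    qed
    have fE: "finite E" using SEF finS finite_subset by blast
    have cE: "card E \<ge> 2"
    proof -
      have "{p, \<sigma>0 p} \<subseteq> E" using pE by blast
      then have "card {p, \<sigma>0 p} \<le> card E" using fE card_mono by blast
      then show ?thesis using pq(5) by simp
    qed
    have cls: "((\<forall>x\<in>E. \<exists>!y. y \<in> F \<and> le x y) \<and> (\<forall>y\<in>F. \<exists>!x. x \<in> E \<and> le x y)) \<or>
         ((\<forall>x\<in>E. \<exists>!y. y \<in> F \<and> \<not> le x y) \<and> (\<forall>y\<in>F. \<exists>!x. x \<in> E \<and> \<not> le x y))"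
      by (rule gen_classify[OF HE HF pE pq(5)[symmetric]])
    then show ?thesis
    proof
      assume "(\<forall>x\<in>E. \<exists>!y. y \<in> F \<and> le x y) \<and> (\<forall>y\<in>F. \<exists>!x. x \<in> E \<and> le x y)"
      then have "poset_iso S le (parC2_carrier (card E)) parC2_le" using B.perm_iso by blast
      then show ?thesis using cE by blast
    next
      assume "(\<forall>x\<in>E. \<exists>!y. y \<in> F \<and> \<not> le x y) \<and> (\<forall>y\<in>F. \<exists>!x. x \<in> E \<and> \<not> le x y)"
      then have ci: "poset_iso S le (crown_carrier (card E)) crown_le" using B.crown_iso by blast
      show ?thesis
      proof (cases "card E \<ge> 3")
        case True then show ?thesis using ci by blast
      next
        case False
        then have "card E = 2" using cE by simp
        then have "poset_iso S le (parC2_carrier 2) parC2_le" using iso_trans[OF ci] crown2_par2 by simp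
        then show ?thesis by blast
      qed
    qed
  qed
qed

end



context bip begin

lemma dn_E: "x \<in> E \<Longrightarrow> dn x = 1"
proof -
  assume x: "x \<in> E"
  have "{z\<in>S. le z x} = {x}"
  proof
    show "{z\<in>S. le z x} \<subseteq> {x}"
    proof
      fix z assume z: "z \<in> {z\<in>S. le z x}"
      then have "z \<in> E \<or> z \<in> F" using SEF by blast
      then show "z \<in> {x}" using z x le_EE le_FE by blast
    qed
    show "{x} \<subseteq> {z\<in>S. le z x}" using x ES refl by blast
  qed
  then show ?thesis unfolding dn_def by simp
qed

lemma dn_F: "y \<in> F \<Longrightarrow> x \<in> E \<Longrightarrow> le x y \<Longrightarrow> dn y \<noteq> 1"
proof -
  assume y: "y \<in> F" and x: "x \<in> E" "le x y"
  have "{x, y} \<subseteq> {z\<in>S. le z y}" using x y ES FS refl by blast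
  moreover have "finite {z\<in>S. le z y}" using finS by simp
  ultimately have "card {x, y} \<le> dn y" unfolding dn_def using card_mono by blast
  moreover have "x \<noteq> y" using x y disj by blast
  ultimately show ?thesis by simp
qed

lemma NC:
  assumes tfE: "\<And>a a'. a \<in> E \<Longrightarrow> a' \<in> E \<Longrightarrow> (\<forall>y\<in>F. le a y \<longleftrightarrow> le a' y) \<Longrightarrow> a = a'"
    and tfF: "\<And>b b'. b \<in> F \<Longrightarrow> b' \<in> F \<Longrightarrow> (\<forall>x\<in>E. le x b \<longleftrightarrow> le x b') \<Longrightarrow> b = b'"
    and below: "\<And>y. y \<in> F \<Longrightarrow> \<exists>x\<in>E. le x y"
    and aut: "poset_aut S le \<sigma>" and x: "x \<in> S" "\<sigma> x \<noteq> x"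
  shows "\<exists>u\<in>support S \<sigma>. \<exists>v\<in>support S \<sigma>. u \<noteq> v \<and> le u v"
proof (rule ccontr)
  assume no: "\<not> ?thesis"
  have side: "z \<in> E \<longleftrightarrow> \<sigma> z \<in> E" if "z \<in> S" for z
  proof -
    have d: "dn (\<sigma> z) = dn z" using aut_dn[OF aut that] .
    have sz: "\<sigma> z \<in> S" using aut_S[OF aut that] .
    have "w \<in> E \<longleftrightarrow> dn w = 1" if "w \<in> S" for w
    proof (cases "w \<in> E")
      case True then show ?thesis using dn_E by simp
    next
      case False then have "w \<in> F" using that SEF by blast
      then show ?thesis using dn_F below False by blast
    qed
    then show ?thesis using d sz that by metis
  qed
  have fixed: "\<sigma> y = y" if "u \<in> support S \<sigma>" "y \<in> S" "u \<noteq> y" "le u y \<or> le y u" for u y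
  proof (rule ccontr)
    assume "\<sigma> y \<noteq> y"
    then have ys: "y \<in> support S \<sigma>" using that(2) unfolding support_def by blast
    have yu: "y \<noteq> u" using that(3) by simp
    show False using that(4)
    proof
      assume "le u y" then show False using no that(1,3) ys by blast
    next
      assume "le y u" then show False using no that(1) yu ys by blast
    qed
  qed
  have xs: "x \<in> support S \<sigma>" using x unfolding support_def by blast
  have sxS: "\<sigma> x \<in> S" using aut_S[OF aut x(1)] .
  show False
  proof (cases "x \<in> E")
    case True
    have sxE: "\<sigma> x \<in> E" using side x(1) True by blast
    have tw: "\<forall>y\<in>F. le x y \<longleftrightarrow> le (\<sigma> x) y"
    proof
      fix y assume y: "y \<in> F"
      have yS: "y \<in> S" using y FS by blast
      have xy: "x \<noteq> y" using True y disj by blast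
      show "le x y \<longleftrightarrow> le (\<sigma> x) y"
      proof
        assume h: "le x y"
        then have "\<sigma> y = y" using fixed[OF xs yS xy] by blast
        then show "le (\<sigma> x) y" using aut_le[OF aut x(1) yS] h by simp
      next
        assume h: "le (\<sigma> x) y"
        obtain y' where y': "y' \<in> S" "\<sigma> y' = y" using aut_surj[OF aut yS] by blast
        have l: "le x y'" using aut_le[OF aut x(1) y'(1)] h y'(2) by simp
        have "y' \<noteq> x" using y'(2) y sxE disj by blast
        then have "\<sigma> y' = y'" using fixed[OF xs y'(1)] l by blast
        then show "le x y" using l y'(2) by simp
      qed
    qed
    have "x = \<sigma> x" using tfE[OF True sxE tw] .
    then show False using x(2) by simp
  next
    case False
    then have xF: "x \<in> F" using x(1) SEF by blast
    have sxF: "\<sigma> x \<in> F" using side x(1) sxS False SEF by blast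
    have tw: "\<forall>z\<in>E. le z x \<longleftrightarrow> le z (\<sigma> x)"
    proof
      fix z assume z: "z \<in> E"
      have zS: "z \<in> S" using z ES by blast
      have xz: "x \<noteq> z" using xF z disj by blast
      show "le z x \<longleftrightarrow> le z (\<sigma> x)"
      proof
        assume h: "le z x"
        then have "\<sigma> z = z" using fixed[OF xs zS xz] by blast
        then show "le z (\<sigma> x)" using aut_le[OF aut zS x(1)] h by simp
      next
        assume h: "le z (\<sigma> x)"
        obtain z' where z': "z' \<in> S" "\<sigma> z' = z" using aut_surj[OF aut zS] by blast
        have l: "le z' x" using aut_le[OF aut z'(1) x(1)] h z'(2) by simp
        have "x \<noteq> z'" using z'(2) z sxF disj by blast
        then have "\<sigma> z' = z'" using fixed[OF xs z'(1)] l by blast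
        then show "le z x" using l z'(2) by simp
      qed
    qed
    have "x = \<sigma> x" using tfF[OF xF sxF tw] .
    then show False using x(2) by simp
  qed
qed

lemma iso_pair:
  assumes "lt_of le a b" "a \<in> S" "b \<in> S"
  shows "poset_iso {a, b} le C2_carrier C2_le"
proof -
  have ba: "\<not> le b a" using assms antisym unfolding lt_of_def by blast
  have "bij_betw (\<lambda>x. x = b) {a, b} UNIV"
    by (rule bij_betw_byWitness[where f'="\<lambda>t. if t then b else a"]) (use assms in \<open>auto simp: lt_of_def\<close>)
  moreover have "\<forall>x\<in>{a,b}. \<forall>y\<in>{a,b}. le x y \<longleftrightarrow> C2_le (x = b) (y = b)"
    using assms ba refl unfolding C2_le_def lt_of_def by auto
  ultimately show ?thesis unfolding poset_iso_def C2_carrier_def by blast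
qed

lemma backward_core:
  assumes HE: "\<And>a a'. a \<in> E \<Longrightarrow> a' \<in> E \<Longrightarrow> a \<noteq> a' \<Longrightarrow> \<exists>b b'. gen E F le a a' b b'"
    and HF: "\<And>b b'. b \<in> F \<Longrightarrow> b' \<in> F \<Longrightarrow> b \<noteq> b' \<Longrightarrow> \<exists>a a'. gen E F le a a' b b'"
    and tfE: "\<And>a a'. a \<in> E \<Longrightarrow> a' \<in> E \<Longrightarrow> (\<forall>y\<in>F. le a y \<longleftrightarrow> le a' y) \<Longrightarrow> a = a'"
    and tfF: "\<And>b b'. b \<in> F \<Longrightarrow> b' \<in> F \<Longrightarrow> (\<forall>x\<in>E. le x b \<longleftrightarrow> le x b') \<Longrightarrow> b = b'"
    and below: "\<And>y. y \<in> F \<Longrightarrow> \<exists>x\<in>E. le x y"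
    and Fne: "F \<noteq> {}"
  shows "poset_iso (retract'_carrier S le C2_carrier C2_le 2) (quot_le le) C2_carrier C2_le"
proof -
  have notcomp: "\<not> composite_sym S le C2_carrier C2_le 2 X" for X
  proof
    assume "composite_sym S le C2_carrier C2_le 2 X"
    then obtain SQ' r' X' where c: "SQ' \<subseteq> C2_carrier" "2 \<le> r'" "is_sym_set S le SQ' C2_le r' X'" "X' \<noteq> {}"
        "SQ' \<subset> C2_carrier \<or> (SQ' = C2_carrier \<and> r' < 2)"
      unfolding composite_sym_def by blast
    have sub: "SQ' \<subset> C2_carrier" using c(2,5) by auto
    have cSQ: "card SQ' \<le> 1"
    proof -
      have "card SQ' < card (UNIV :: bool set)" using sub unfolding C2_carrier_def
        by (intro psubset_card_mono) simp_all
      then show ?thesis by (simp add: card_UNIV_bool)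
    qed
    obtain A' where A': "X' = sym_set_of S le SQ' C2_le r' A'" using c(3) unfolding is_sym_set_def by blast
    obtain x \<sigma> where xs: "x \<in> S" "\<sigma> \<in> sym_gens S le SQ' C2_le r' A'" "\<sigma> x \<noteq> x"
      using c(4) A' unfolding sym_set_of_def by blast
    obtain T where T: "generator_fam S le SQ' C2_le r' \<sigma> T"
      using xs(2) unfolding sym_gens_def generator_def by blast
    have aut: "poset_aut S le \<sigma>" using T unfolding generator_fam_def by blast
    have r0: "0 < r'" using c(2) by simp
    have T0: "T 0 \<subseteq> support S \<sigma>" "chain_len le (T 0) = chain_len le (support S \<sigma>)"
      using T r0 unfolding generator_fam_def cyc_family_def by blast+
    have iso0: "poset_iso (T 0) le SQ' C2_le" using T r0 unfolding generator_fam_def by blast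
    then obtain g where "bij_betw g (T 0) SQ'" unfolding poset_iso_def by blast
    then have "card (T 0) = card SQ'" by (rule bij_betw_same_card)
    have fsup: "finite (support S \<sigma>)" using finS support_sub finite_subset by blast
    have fT: "finite (T 0)" using T0(1) fsup finite_subset by blast
    have "chain_len le (T 0) \<le> 1"
      using chain_len_le_card[OF fT] \<open>card (T 0) = card SQ'\<close> cSQ by simp
    moreover obtain u v where uv: "u \<in> support S \<sigma>" "v \<in> support S \<sigma>" "u \<noteq> v" "le u v"
      using NC[OF tfE tfF below aut xs(1,3)] by blast
    then have "chain_len le (support S \<sigma>) \<ge> 2"
      using chain_len_ge2[OF fsup support_sub] by blast
    ultimately show False using T0(2) by simp
  qed
  have spgen: "sp a a' \<and> sp b b'" if g: "gen E F le a a' b b'" for a a' b b'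
  proof -
    note G = gen_facts[OF g]
    have lts: "lt_of le a b" using gen_lt[OF g] by blast
    have inS: "a \<in> S" "a' \<in> S" "b \<in> S" "b' \<in> S" using G(1-4) SEF by auto
    let ?A = "{a, b}"
    let ?X = "sym_set_of S le C2_carrier C2_le 2 ?A"
    have lk: "linked S le ?A"
      unfolding linked_def
    proof (intro conjI ballI impI)
      show "?A \<subseteq> S" using inS by blast
      fix u v assume uv: "u \<in> ?A" "v \<in> ?A" "lt_of le u v"
      then have uvab: "u = a" "v = b" using lts antisym inS unfolding lt_of_def by auto
      have "\<not> (\<exists>c\<in>S. lt_of le a c \<and> lt_of le c b)"
      proof
        assume "\<exists>c\<in>S. lt_of le a c \<and> lt_of le c b"
        then obtain c where "c \<in> S" "lt_of le a c" "lt_of le c b" by blast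
        then have "c \<in> F" "c \<in> E" using ltEF inS by blast+
        then show False using disj by blast
      qed
      then show "covers S le u v \<or> (\<exists>c\<in>?A. lt_of le u c \<and> lt_of le c v)"
        unfolding covers_def using uvab lts by blast
    qed
    have prime: "prime_sym_set S le C2_carrier C2_le 2 ?A ?X"
      unfolding prime_sym_set_def using lk iso_pair[OF lts inS(1,3)] notcomp by blast
    have s1: "sym1_via S le C2_carrier C2_le 2 (swf a a' b b') a a'"
      "sym1_via S le C2_carrier C2_le 2 (swf a a' b b') b b'" using swap_sym1[OF g] by auto
    have q1: "qr_sym S le C2_carrier C2_le 2 a a'" "qr_sym S le C2_carrier C2_le 2 b b'"
      using s1 unfolding qr_sym_def sym1_def by blast+
    have q0: "qr_sym S le C2_carrier C2_le 2 a a" "qr_sym S le C2_carrier C2_le 2 b b"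
      unfolding qr_sym_def by simp_all
    have "swf a a' b b' \<in> sym_gens S le C2_carrier C2_le 2 ?A"
      unfolding sym_gens_def generator_def
    proof (intro CollectI conjI ballI impI)
      show "\<exists>T. generator_fam S le C2_carrier C2_le 2 (swf a a' b b') T" using swap_generator[OF g] by blast
    next
      fix c assume c: "c \<in> S" "\<not> (\<exists>a0\<in>?A. qr_sym S le C2_carrier C2_le 2 a0 c)"
      then have "c \<noteq> a" "c \<noteq> a'" "c \<noteq> b" "c \<noteq> b'" using q0 q1 by blast+
      then show "swf a a' b b' c = c" by (rule swf_out)
    qed
    then show ?thesis unfolding sym1_prime_def using prime s1 by blast
  qed
  have dnE: "x \<in> E \<longleftrightarrow> dn x = 1" if "x \<in> S" for x
  proof (cases "x \<in> E")
    case True then show ?thesis using dn_E by simp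
  next
    case False then have "x \<in> F" using that SEF by blast
    then show ?thesis using dn_F below False by blast
  qed
  have RR_side: "x \<in> E \<longleftrightarrow> y \<in> E" if "(x, y) \<in> RR" for x y
  proof -
    have h: "sp\<^sup>*\<^sup>* x y" "x \<in> S" "y \<in> S" using that RR_iff by auto
    have "dn y = dn x" using rtc_dn[OF h(1,2)] by simp
    then show ?thesis using dnE[OF h(2)] dnE[OF h(3)] by simp
  qed
  have RR_E: "(x, y) \<in> RR" if xy: "x \<in> E" "y \<in> E" for x y
  proof (cases "x = y")
    case True then show ?thesis using xy ES RR_iff by auto
  next
    case False
    then obtain b b' where "gen E F le x y b b'" using HE xy by blast
    then have "sp x y" using spgen by blast
    then show ?thesis using xy ES RR_iff by auto
  qed
  have RR_F: "(x, y) \<in> RR" if xy: "x \<in> F" "y \<in> F" for x y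
  proof (cases "x = y")
    case True then show ?thesis using xy FS RR_iff by auto
  next
    case False
    then obtain a a' where "gen E F le a a' x y" using HF xy by blast
    then have "sp x y" using spgen by blast
    then show ?thesis using xy FS RR_iff by auto
  qed
  have cls: "RR``{x} = (if x \<in> E then E else F)" if x: "x \<in> S" for x
  proof (cases "x \<in> E")
    case True
    have "RR``{x} = E"
    proof
      show "RR``{x} \<subseteq> E" using RR_side True by blast
      show "E \<subseteq> RR``{x}" using RR_E True by blast
    qed
    then show ?thesis using True by simp
  next
    case False
    then have xF: "x \<in> F" using x SEF by blast
    have "RR``{x} = F"
    proof
      show "RR``{x} \<subseteq> F"
      proof
        fix y assume "y \<in> RR``{x}"
        then have "(x, y) \<in> RR" by blast
        then have "y \<in> S" "y \<notin> E" using RR_side False RR_iff by auto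
        then show "y \<in> F" using SEF by blast
      qed
      show "F \<subseteq> RR``{x}" using RR_F xF by blast
    qed
    then show ?thesis using False by simp
  qed
  obtain y0 where y0: "y0 \<in> F" using Fne by blast
  obtain x0 where x0: "x0 \<in> E" "le x0 y0" using below[OF y0] by blast
  have Ene: "E \<noteq> {}" using x0 by blast
  have quo: "S//RR = {E, F}"
  proof
    show "S//RR \<subseteq> {E, F}"
    proof
      fix X assume "X \<in> S//RR"
      then obtain x where "X = RR``{x}" "x \<in> S" by (rule quotientE)
      then show "X \<in> {E, F}" using cls by auto
    qed
    show "{E, F} \<subseteq> S//RR"
    proof -
      have x0S: "x0 \<in> S" using x0(1) ES by blast
      have y0S: "y0 \<in> S" using y0 FS by blast
      have y0E: "y0 \<notin> E" using y0 disj by blast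
      have "RR``{x0} = E" using cls[OF x0S] x0(1) by simp
      moreover have "RR``{y0} = F" using cls[OF y0S] y0E by simp
      moreover have "RR``{x0} \<in> S//RR" by (rule quotientI[OF x0S])
      moreover have "RR``{y0} \<in> S//RR" by (rule quotientI[OF y0S])
      ultimately show ?thesis by simp
    qed
  qed
  have EF: "E \<noteq> F" using Ene disj by blast
  have q: "quot_le le X Y \<longleftrightarrow> C2_le (X = F) (Y = F)" if "X \<in> {E, F}" "Y \<in> {E, F}" for X Y
  proof -
    have EE: "quot_le le E E" using x0 ES refl unfolding quot_le_def by blast
    have FF: "quot_le le F F" using y0 FS refl unfolding quot_le_def by blast
    have EF': "quot_le le E F" using x0 y0 unfolding quot_le_def by blast
    have FE: "\<not> quot_le le F E" using le_FE unfolding quot_le_def by blast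
    have X: "X = E \<or> X = F" and Y: "Y = E \<or> Y = F" using that by auto
    show ?thesis
    proof (cases "X = F")
      case True
      show ?thesis
      proof (cases "Y = F")
        case True then show ?thesis using \<open>X = F\<close> FF unfolding C2_le_def by simp
      next
        case False then have "Y = E" using Y by blast
        then show ?thesis using \<open>X = F\<close> FE EF unfolding C2_le_def by simp
      qed
    next
      case False then have XE: "X = E" using X by blast
      show ?thesis
      proof (cases "Y = F")
        case True then show ?thesis using XE EF' EF unfolding C2_le_def by simp
      next
        case False then have "Y = E" using Y by blast
        then show ?thesis using XE EE EF unfolding C2_le_def by simp
      qed
    qed
  qed
  have bij: "bij_betw (\<lambda>X. X = F) {E, F} UNIV"
    by (rule bij_betw_byWitness[where f'="\<lambda>t. if t then F else E"]) (use EF in auto)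
  have rc: "retract'_carrier S le C2_carrier C2_le 2 = {E, F}"
    unfolding retract'_carrier_def by (rule quo)
  have bij': "bij_betw (\<lambda>X. X = F) (retract'_carrier S le C2_carrier C2_le 2) C2_carrier"
    using bij rc by (simp add: C2_carrier_def)
  have ord': "\<forall>X\<in>retract'_carrier S le C2_carrier C2_le 2. \<forall>Y\<in>retract'_carrier S le C2_carrier C2_le 2.
      quot_le le X Y \<longleftrightarrow> C2_le (X = F) (Y = F)"
    unfolding rc using q by blast
  show ?thesis unfolding poset_iso_def
    by (rule exI[of _ "\<lambda>X. X = F"]) (use bij' ord' in blast)
qed

end



context fposet begin

lemma from_iso:
  fixes n :: nat and tle :: "nat \<times> bool \<Rightarrow> nat \<times> bool \<Rightarrow> bool" and KK :: "nat \<Rightarrow> nat \<Rightarrow> bool"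
  assumes iso: "poset_iso S le ({..<n} \<times> UNIV) tle"
    and tle: "\<And>p q. p \<in> {..<n} \<times> UNIV \<Longrightarrow> q \<in> {..<n} \<times> UNIV \<Longrightarrow>
               tle p q \<longleftrightarrow> p = q \<or> (\<not> snd p \<and> snd q \<and> KK (fst p) (fst q))"
  shows "\<exists>e f. (\<forall>i<n. e i \<in> S \<and> f i \<in> S) \<and>
     (\<forall>i<n. \<forall>j<n. (e i = e j \<longleftrightarrow> i = j) \<and> (f i = f j \<longleftrightarrow> i = j) \<and> e i \<noteq> f j \<and>
        (le (e i) (e j) \<longleftrightarrow> i = j) \<and> (le (f i) (f j) \<longleftrightarrow> i = j) \<and> \<not> le (f i) (e j) \<and>
        (le (e i) (f j) \<longleftrightarrow> KK i j)) \<and>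
     S = e ` {..<n} \<union> f ` {..<n} \<and> card S = 2 * n"
proof -
  let ?C = "{..<n} \<times> (UNIV :: bool set)"
  obtain \<phi> where phi: "bij_betw \<phi> S ?C" "\<forall>a\<in>S. \<forall>b\<in>S. le a b \<longleftrightarrow> tle (\<phi> a) (\<phi> b)"
    using iso unfolding poset_iso_def by blast
  let ?psi = "inv_into S \<phi>"
  have bpsi: "bij_betw ?psi ?C S" using bij_betw_inv_into[OF phi(1)] .
  have psiS: "\<And>p. p \<in> ?C \<Longrightarrow> ?psi p \<in> S" using bpsi by (meson bij_betwE)
  have phipsi: "\<And>p. p \<in> ?C \<Longrightarrow> \<phi> (?psi p) = p" using phi(1) by (meson bij_betw_inv_into_right)
  have psiphi: "\<And>x. x \<in> S \<Longrightarrow> ?psi (\<phi> x) = x" using phi(1) by (meson bij_betw_inv_into_left)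
  have phiC: "\<And>x. x \<in> S \<Longrightarrow> \<phi> x \<in> ?C" using phi(1) by (meson bij_betwE)
  have lepsi: "le (?psi p) (?psi q) \<longleftrightarrow> tle p q" if "p \<in> ?C" "q \<in> ?C" for p q
    using phi(2) psiS[OF that(1)] psiS[OF that(2)] phipsi that by simp
  have psiinj: "?psi p = ?psi q \<longleftrightarrow> p = q" if "p \<in> ?C" "q \<in> ?C" for p q
    using phipsi that by metis
  define e where "e i = ?psi (i, False)" for i
  define f where "f i = ?psi (i, True)" for i
  have inC: "\<And>i b. i < n \<Longrightarrow> (i, b) \<in> ?C" by simp
  have A1: "\<forall>i<n. e i \<in> S \<and> f i \<in> S" unfolding e_def f_def using psiS inC by blast
  have A2: "\<forall>i<n. \<forall>j<n. (e i = e j \<longleftrightarrow> i = j) \<and> (f i = f j \<longleftrightarrow> i = j) \<and> e i \<noteq> f j \<and>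
        (le (e i) (e j) \<longleftrightarrow> i = j) \<and> (le (f i) (f j) \<longleftrightarrow> i = j) \<and> \<not> le (f i) (e j) \<and>
        (le (e i) (f j) \<longleftrightarrow> KK i j)"
  proof (intro allI impI)
    fix i j assume ij: "i < n" "j < n"
    have C: "(i, False) \<in> ?C" "(i, True) \<in> ?C" "(j, False) \<in> ?C" "(j, True) \<in> ?C" using ij by auto
    show "(e i = e j \<longleftrightarrow> i = j) \<and> (f i = f j \<longleftrightarrow> i = j) \<and> e i \<noteq> f j \<and>
        (le (e i) (e j) \<longleftrightarrow> i = j) \<and> (le (f i) (f j) \<longleftrightarrow> i = j) \<and> \<not> le (f i) (e j) \<and>
        (le (e i) (f j) \<longleftrightarrow> KK i j)"
      unfolding e_def f_def using psiinj[OF C(1) C(3)] psiinj[OF C(2) C(4)] psiinj[OF C(1) C(4)]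
        lepsi[OF C(1) C(3)] lepsi[OF C(2) C(4)] lepsi[OF C(2) C(3)] lepsi[OF C(1) C(4)]
        tle[OF C(1) C(3)] tle[OF C(2) C(4)] tle[OF C(2) C(3)] tle[OF C(1) C(4)]
      by simp
  qed
  have A3: "S = e ` {..<n} \<union> f ` {..<n}"
  proof
    show "S \<subseteq> e ` {..<n} \<union> f ` {..<n}"
    proof
      fix x assume x: "x \<in> S"
      obtain i b where ib: "\<phi> x = (i, b)" by (cases "\<phi> x")
      have i: "i < n" using phiC[OF x] ib by auto
      have "x = ?psi (i, b)" using psiphi[OF x] ib by simp
      then show "x \<in> e ` {..<n} \<union> f ` {..<n}" unfolding e_def f_def using i by (cases b) auto
    qed
    show "e ` {..<n} \<union> f ` {..<n} \<subseteq> S" using A1 by auto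
  qed
  have A4: "card S = 2 * n"
  proof -
    have "card S = card ?C" using bij_betw_same_card[OF phi(1)] .
    also have "\<dots> = n * 2" by (simp add: card_cartesian_product card_UNIV_bool)
    finally show ?thesis by simp
  qed
  show ?thesis using A1 A2 A3 A4 by blast
qed

lemma not_C2_card: "card S \<noteq> 2 \<Longrightarrow> \<not> poset_iso S le C2_carrier C2_le"
proof
  assume c: "card S \<noteq> 2" and "poset_iso S le C2_carrier C2_le"
  then obtain g where "bij_betw g S C2_carrier" unfolding poset_iso_def by blast
  then have "card S = card C2_carrier" by (rule bij_betw_same_card)
  then show False using c unfolding C2_carrier_def by (simp add: card_UNIV_bool)
qed

lemma backward_idx:
  fixes n :: nat and KK :: "nat \<Rightarrow> nat \<Rightarrow> bool" and e f :: "nat \<Rightarrow> 'a"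
  assumes A1: "\<forall>i<n. e i \<in> S \<and> f i \<in> S"
    and A2: "\<forall>i<n. \<forall>j<n. (e i = e j \<longleftrightarrow> i = j) \<and> (f i = f j \<longleftrightarrow> i = j) \<and> e i \<noteq> f j \<and>
        (le (e i) (e j) \<longleftrightarrow> i = j) \<and> (le (f i) (f j) \<longleftrightarrow> i = j) \<and> \<not> le (f i) (e j) \<and>
        (le (e i) (f j) \<longleftrightarrow> KK i j)"
    and A3: "S = e ` {..<n} \<union> f ` {..<n}"
    and n2: "n \<ge> 2"
    and KKd: "\<And>i j. i < n \<Longrightarrow> j < n \<Longrightarrow> i \<noteq> j \<Longrightarrow> KK i i \<noteq> KK j i \<and> KK i i \<noteq> KK i j"
    and KKb: "\<And>i. i < n \<Longrightarrow> \<exists>j<n. KK j i"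
    and HEi: "\<And>i j. i < n \<Longrightarrow> j < n \<Longrightarrow> i \<noteq> j \<Longrightarrow>
                 \<exists>c c'. c < n \<and> c' < n \<and> gen (e ` {..<n}) (f ` {..<n}) le (e i) (e j) (f c) (f c')"
    and HFi: "\<And>i j. i < n \<Longrightarrow> j < n \<Longrightarrow> i \<noteq> j \<Longrightarrow>
                 \<exists>c c'. c < n \<and> c' < n \<and> gen (e ` {..<n}) (f ` {..<n}) le (e c) (e c') (f i) (f j)"
  shows "poset_iso (retract'_carrier S le C2_carrier C2_le 2) (quot_le le) C2_carrier C2_le"
proof -
  let ?E = "e ` {..<n}" and ?F = "f ` {..<n}"
  have disj: "?E \<inter> ?F = {}" using A2 by blast
  have ltEF: "x \<in> ?E \<and> y \<in> ?F" if xy: "x \<in> S" "y \<in> S" "lt_of le x y" for x y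
  proof -
    have ne: "x \<noteq> y" "le x y" using xy(3) unfolding lt_of_def by auto
    consider i j where "i < n" "j < n" "x = e i" "y = e j" | i j where "i < n" "j < n" "x = e i" "y = f j"
      | i j where "i < n" "j < n" "x = f i" "y = e j" | i j where "i < n" "j < n" "x = f i" "y = f j"
      using xy(1,2) A3 by blast
    then show ?thesis
    proof cases
      case 1 then show ?thesis using A2 ne by metis
    next
      case 2 then show ?thesis by blast
    next
      case 3 then show ?thesis using A2 ne by metis
    next
      case 4 then show ?thesis using A2 ne by metis
    qed
  qed
  interpret B: bip S le ?E ?F
  proof unfold_locales
    show "S = ?E \<union> ?F" by (rule A3)
    show "?E \<inter> ?F = {}" by (rule disj)
    show "\<And>x y. x \<in> S \<Longrightarrow> y \<in> S \<Longrightarrow> lt_of le x y \<Longrightarrow> x \<in> ?E \<and> y \<in> ?F" by (rule ltEF)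
  qed
  show ?thesis
  proof (rule B.backward_core)
    fix a a' assume a: "a \<in> ?E" "a' \<in> ?E" "a \<noteq> a'"
    then obtain i j where "i < n" "j < n" "a = e i" "a' = e j" "i \<noteq> j" by blast
    then show "\<exists>b b'. gen ?E ?F le a a' b b'" using HEi by blast
  next
    fix b b' assume b: "b \<in> ?F" "b' \<in> ?F" "b \<noteq> b'"
    then obtain i j where "i < n" "j < n" "b = f i" "b' = f j" "i \<noteq> j" by blast
    then show "\<exists>a a'. gen ?E ?F le a a' b b'" using HFi by blast
  next
    fix a a' assume a: "a \<in> ?E" "a' \<in> ?E" and tw: "\<forall>y\<in>?F. le a y \<longleftrightarrow> le a' y"
    then obtain i j where ij: "i < n" "j < n" "a = e i" "a' = e j" by blast
    show "a = a'"
    proof (rule ccontr)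
      assume "a \<noteq> a'"
      then have "i \<noteq> j" using ij by blast
      moreover have "le (e i) (f i) \<longleftrightarrow> le (e j) (f i)" using tw ij by blast
      ultimately show False using KKd[OF ij(1,2)] A2 ij(1,2) by metis
    qed
  next
    fix b b' assume b: "b \<in> ?F" "b' \<in> ?F" and tw: "\<forall>x\<in>?E. le x b \<longleftrightarrow> le x b'"
    then obtain i j where ij: "i < n" "j < n" "b = f i" "b' = f j" by blast
    show "b = b'"
    proof (rule ccontr)
      assume "b \<noteq> b'"
      then have "i \<noteq> j" using ij by blast
      moreover have "le (e i) (f i) \<longleftrightarrow> le (e i) (f j)" using tw ij by blast
      ultimately show False using KKd[OF ij(1,2)] A2 ij(1,2) by metis
    qed
  next
    fix y assume "y \<in> ?F"
    then obtain i where i: "i < n" "y = f i" by blast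
    obtain j where "j < n" "KK j i" using KKb[OF i(1)] by blast
    then show "\<exists>x\<in>?E. le x y" using A2 i by blast
  next
    have "f 0 \<in> ?F" using n2 by simp
    then show "?F \<noteq> {}" by blast
  qed
qed

lemma gen_idx:
  fixes n :: nat and KK :: "nat \<Rightarrow> nat \<Rightarrow> bool" and e f :: "nat \<Rightarrow> 'a"
  assumes A2: "\<forall>i<n. \<forall>j<n. (e i = e j \<longleftrightarrow> i = j) \<and> (f i = f j \<longleftrightarrow> i = j) \<and> e i \<noteq> f j \<and>
        (le (e i) (e j) \<longleftrightarrow> i = j) \<and> (le (f i) (f j) \<longleftrightarrow> i = j) \<and> \<not> le (f i) (e j) \<and>
        (le (e i) (f j) \<longleftrightarrow> KK i j)"
    and ij: "i < n" "j < n" "i \<noteq> j" "c < n" "c' < n" "c \<noteq> c'"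
    and k1: "KK i c" "KK j c'" "\<not> KK i c'" "\<not> KK j c"
    and k2: "\<And>k. k < n \<Longrightarrow> k \<noteq> i \<Longrightarrow> k \<noteq> j \<Longrightarrow> KK k c \<longleftrightarrow> KK k c'"
    and k3: "\<And>k. k < n \<Longrightarrow> k \<noteq> c \<Longrightarrow> k \<noteq> c' \<Longrightarrow> KK i k \<longleftrightarrow> KK j k"
  shows "gen (e ` {..<n}) (f ` {..<n}) le (e i) (e j) (f c) (f c')"
  unfolding gen_def
proof (intro conjI ballI impI)
  show "e i \<in> e ` {..<n}" "e j \<in> e ` {..<n}" "f c \<in> f ` {..<n}" "f c' \<in> f ` {..<n}" using ij by auto
  show "e i \<noteq> e j" "f c \<noteq> f c'" using A2 ij by auto
  show "le (e i) (f c)" "le (e j) (f c')" "\<not> le (e i) (f c')" "\<not> le (e j) (f c)" using A2 ij k1 by auto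
next
  fix x assume x: "x \<in> e ` {..<n}" "x \<noteq> e i" "x \<noteq> e j"
  then obtain k where k: "k < n" "x = e k" by blast
  then have "k \<noteq> i" "k \<noteq> j" using x by auto
  then show "le x (f c) \<longleftrightarrow> le x (f c')" using k2[OF k(1)] A2 k ij by auto
next
  fix y assume y: "y \<in> f ` {..<n}" "y \<noteq> f c" "y \<noteq> f c'"
  then obtain k where k: "k < n" "y = f k" by blast
  then have "k \<noteq> c" "k \<noteq> c'" using y by auto
  then show "le (e i) y \<longleftrightarrow> le (e j) y" using k3[OF k(1)] A2 k ij by auto
qed

lemma backward_par:
  assumes iso: "poset_iso S le (parC2_carrier n) parC2_le" and n2: "n \<ge> 2"
  shows "in_odot' S le C2_carrier C2_le C2_carrier C2_le 2"
proof -
  have iso': "poset_iso S le ({..<n} \<times> UNIV) parC2_le" using iso unfolding parC2_carrier_def .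
  have tle: "parC2_le p q \<longleftrightarrow> p = q \<or> (\<not> snd p \<and> snd q \<and> fst p = fst q)"
    if "p \<in> {..<n} \<times> UNIV" "q \<in> {..<n} \<times> UNIV" for p q :: "nat \<times> bool"
    unfolding parC2_le_def by (cases p, cases q) auto
  obtain e f where A: "\<forall>i<n. e i \<in> S \<and> f i \<in> S"
     "\<forall>i<n. \<forall>j<n. (e i = e j \<longleftrightarrow> i = j) \<and> (f i = f j \<longleftrightarrow> i = j) \<and> e i \<noteq> f j \<and>
        (le (e i) (e j) \<longleftrightarrow> i = j) \<and> (le (f i) (f j) \<longleftrightarrow> i = j) \<and> \<not> le (f i) (e j) \<and>
        (le (e i) (f j) \<longleftrightarrow> i = j)"
     "S = e ` {..<n} \<union> f ` {..<n}" "card S = 2 * n"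
    using from_iso[where KK="\<lambda>i j. i = j", OF iso' tle] by blast
  have KKd: "\<And>i j. i < n \<Longrightarrow> j < n \<Longrightarrow> i \<noteq> j \<Longrightarrow> (i = i) \<noteq> (j = i) \<and> (i = i) \<noteq> (i = j)" by auto
  have KKb: "\<And>i. i < n \<Longrightarrow> \<exists>j<n. j = i" by auto
  have G: "gen (e ` {..<n}) (f ` {..<n}) le (e i) (e j) (f i) (f j)" if ij: "i < n" "j < n" "i \<noteq> j" for i j
  proof (rule gen_idx[where KK="\<lambda>i j. i = j", OF A(2) ij ij(1,2)])
    show "i \<noteq> j" by (rule ij(3))
  qed (use ij in auto)
  have HEi: "\<exists>c c'. c < n \<and> c' < n \<and> gen (e ` {..<n}) (f ` {..<n}) le (e i) (e j) (f c) (f c')"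
    if ij: "i < n" "j < n" "i \<noteq> j" for i j using G[OF ij] ij by blast
  have HFi: "\<exists>c c'. c < n \<and> c' < n \<and> gen (e ` {..<n}) (f ` {..<n}) le (e c) (e c') (f i) (f j)"
    if ij: "i < n" "j < n" "i \<noteq> j" for i j using G[OF ij] ij by blast
  have r: "poset_iso (retract'_carrier S le C2_carrier C2_le 2) (quot_le le) C2_carrier C2_le"
    by (rule backward_idx[where KK="\<lambda>i j. i = j", OF A(1,2,3) n2 KKd KKb HEi HFi])
  have "card S \<noteq> 2" using A(4) n2 by simp
  then have "\<not> poset_iso S le C2_carrier C2_le" by (rule not_C2_card)
  then show ?thesis unfolding in_odot'_def using r by blast
qed

lemma backward_crown:
  assumes iso: "poset_iso S le (crown_carrier n) crown_le" and n3: "n \<ge> 3"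
  shows "in_odot' S le C2_carrier C2_le C2_carrier C2_le 2"
proof -
  have n2: "n \<ge> 2" using n3 by simp
  have iso': "poset_iso S le ({..<n} \<times> UNIV) crown_le" using iso unfolding crown_carrier_def .
  have tle: "crown_le p q \<longleftrightarrow> p = q \<or> (\<not> snd p \<and> snd q \<and> fst p \<noteq> fst q)"
    if "p \<in> {..<n} \<times> UNIV" "q \<in> {..<n} \<times> UNIV" for p q :: "nat \<times> bool"
    unfolding crown_le_def by simp
  obtain e f where A: "\<forall>i<n. e i \<in> S \<and> f i \<in> S"
     "\<forall>i<n. \<forall>j<n. (e i = e j \<longleftrightarrow> i = j) \<and> (f i = f j \<longleftrightarrow> i = j) \<and> e i \<noteq> f j \<and>
        (le (e i) (e j) \<longleftrightarrow> i = j) \<and> (le (f i) (f j) \<longleftrightarrow> i = j) \<and> \<not> le (f i) (e j) \<and>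
        (le (e i) (f j) \<longleftrightarrow> i \<noteq> j)"
     "S = e ` {..<n} \<union> f ` {..<n}" "card S = 2 * n"
    using from_iso[where KK="\<lambda>i j. i \<noteq> j", OF iso' tle] by blast
  have KKd: "\<And>i j. i < n \<Longrightarrow> j < n \<Longrightarrow> i \<noteq> j \<Longrightarrow> (i \<noteq> i) \<noteq> (j \<noteq> i) \<and> (i \<noteq> i) \<noteq> (i \<noteq> j)" by auto
  have KKb: "\<exists>j<n. j \<noteq> i" if "i < n" for i
  proof (cases "i = 0")
    case True then show ?thesis using n2 by (intro exI[of _ 1]) auto
  next
    case False then show ?thesis using n2 by (intro exI[of _ 0]) auto
  qed
  have G: "gen (e ` {..<n}) (f ` {..<n}) le (e i) (e j) (f j) (f i)" if ij: "i < n" "j < n" "i \<noteq> j" for i j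
  proof (rule gen_idx[where KK="\<lambda>i j. i \<noteq> j", OF A(2) ij ij(2,1)])
    show "j \<noteq> i" using ij(3) by simp
  qed (use ij in auto)
  have HEi: "\<exists>c c'. c < n \<and> c' < n \<and> gen (e ` {..<n}) (f ` {..<n}) le (e i) (e j) (f c) (f c')"
    if ij: "i < n" "j < n" "i \<noteq> j" for i j using G[OF ij] ij by blast
  have HFi: "\<exists>c c'. c < n \<and> c' < n \<and> gen (e ` {..<n}) (f ` {..<n}) le (e c) (e c') (f i) (f j)"
    if ij: "i < n" "j < n" "i \<noteq> j" for i j
  proof -
    have "j \<noteq> i" using ij(3) by simp
    then show ?thesis using G[OF ij(2,1)] ij by blast
  qed
  have r: "poset_iso (retract'_carrier S le C2_carrier C2_le 2) (quot_le le) C2_carrier C2_le"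
    by (rule backward_idx[where KK="\<lambda>i j. i \<noteq> j", OF A(1,2,3) n2 KKd KKb HEi HFi])
  have "card S \<noteq> 2" using A(4) n2 by simp
  then have "\<not> poset_iso S le C2_carrier C2_le" by (rule not_C2_card)
  then show ?thesis unfolding in_odot'_def using r by blast
qed

end

theorem mainTheorem7:
  fixes S :: "'a set" and le :: "'a \<Rightarrow> 'a \<Rightarrow> bool"
  assumes "finite_poset S le"
  shows "in_odot' S le C2_carrier C2_le C2_carrier C2_le 2 \<longleftrightarrow>
         ((\<exists>n\<ge>2. poset_iso S le (parC2_carrier n) parC2_le) \<or>
          (\<exists>n\<ge>3. poset_iso S le (crown_carrier n) crown_le))"
proof -
  interpret P: fposet S le by (unfold_locales) (rule assms)
  show ?thesis
  proof
    assume "in_odot' S le C2_carrier C2_le C2_carrier C2_le 2"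
    then show "(\<exists>n\<ge>2. poset_iso S le (parC2_carrier n) parC2_le) \<or>
          (\<exists>n\<ge>3. poset_iso S le (crown_carrier n) crown_le)"
      unfolding in_odot'_def using P.forward by blast
  next
    assume "(\<exists>n\<ge>2. poset_iso S le (parC2_carrier n) parC2_le) \<or>
          (\<exists>n\<ge>3. poset_iso S le (crown_carrier n) crown_le)"
    then show "in_odot' S le C2_carrier C2_le C2_carrier C2_le 2"
      using P.backward_par P.backward_crown by blast
  qed
qed


end
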